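(* Let $I=(i_1\le\cdots\le i_k)$ be a non-decreasing multiset of $[m+n]$ and $\lambda=(\lambda_1,\ldots,\lambda_l)$ a partition of $k$. Then $$\mathrm{Imm}_{\psi^{\lambda}}(X_I)=\sum_{(I_1,\ldots,I_l)}\frac{\alpha(I)}{\alpha(I_1)\cdots\alpha(I_l)}\mathrm{Imm}_{\chi^{(1^{\lambda_1})}}(X_{I_1})\cdots\mathrm{Imm}_{\chi^{(1^{\lambda_l})}}(X_{I_l}),$$ $$\mathrm{Imm}_{\phi^{\lambda}}(X_I)=\sum_{(I_1,\ldots,I_l)}\frac{\alpha(I)}{\alpha(I_1)\cdots\alpha(I_l)}\mathrm{Imm}_{\chi^{(\lambda_1)}}(X_{I_1})\cdots\mathrm{Imm}_{\chi^{(\lambda_l)}}(X_{I_l}),$$ where the sums run over all sequences $(I_1,\ldots,I_l)$ of non-decreasing multisets of $[m+n]$ with $|I_j|=\lambda_j$ whose multiset union is $I$.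
   Context: $\mathbb{C}^{m|n}$ has homogeneous basis $e_1,\ldots,e_{m+n}$, parity $\bar i=0$ for $i\le m$, $\bar i=1$ for $i>m$; $e_{ij}$ are matrix units of parity $\bar i+\bar j$. $\mathcal{A}=A(\mathrm{Mat}_{m|n})$ is the free supercommutative $\mathbb{C}$-algebra on generators $x_{ij}$ of parity $\bar i+\bar j$. For $k\ge1$, $X_a=\sum_{i,j}x_{ij}\otimes1^{\otimes(a-1)}\otimes e_{ij}\otimes1^{\otimes(k-a)}\in\mathcal{A}\otimes\mathrm{End}(\mathbb{C}^{m|n})^{\otimes k}$ (graded tensor products, sign rule $(a\otimes b)(c\otimes d)=(-1)^{|b||c|}ac\otimes bd$). $\mathfrak{S}_k$ acts on $(\mathbb{C}^{m|n})^{\otimes k}$ by $\sigma\cdot(e_{i_1}\otimes\cdots\otimes e_{i_k})=(-1)^{\bar I_\sigma}e_{i_{\sigma^{-1}(1)}}\otimes\cdots\otimes e_{i_{\sigma^{-1}(k)}}$, $\bar I_\sigma=\sum_{p<q,\sigma(p)>\sigma(q)}\bar i_p\bar i_q$, extended to $\mathbb{C}[\mathfrak{S}_k]$ (even elements $1\otimes(\cdot)$). For even $T=\sum_{I,J}T^I_J\otimes e_{i_1j_1}\otimes\cdots\otimes e_{i_kj_k}$, $\langle I\mid T\mid J\rangle=(-1)^{\gamma(I,J)}T^I_J$, $\gamma(I,J)=\sum_a\bar i_a(\bar j_a+1)+\sum_{a<b}\bar j_b(\bar i_a+\bar j_a)$. For a character $\chi$ of $\mathfrak{S}_k$ (identified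 with $\sum_\sigma\chi(\sigma)\sigma$) and a $k$-tuple $I$, $\mathrm{Imm}_{\chi}(X_I)=(-1)^{\sum_p\bar i_p}\langle I\mid\chi X_1\cdots X_k\mid I\rangle$. $\chi^{\mu}$ denotes the irreducible character indexed by $\mu$; $(1^j)$ and $(j)$ are the one-column and one-row partitions. $\psi^{\lambda}$ (resp. $\phi^{\lambda}$) is the character of $\mathfrak{S}_k$ induced from the sign character (resp. trivial character) of the Young subgroup $\mathfrak{S}_{\lambda_1}\times\cdots\times\mathfrak{S}_{\lambda_l}$. For a non-decreasing multiset $I$, $\alpha(I)=\prod_i\alpha_i!$ with $\alpha_i$ the multiplicity of $i$ in $I$. *)

theory Defs
  imports Complex_Main "HOL-Library.Poly_Mapping" "HOL-Library.Product_Lexorder"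
    "HOL-Combinatorics.Permutations"
begin

text \<open>Indices of the basis of C^(m|n) are 1..m+n; parity 0 for i \<le> m, 1 otherwise.\<close>
definition par :: "nat \<Rightarrow> nat \<Rightarrow> nat" where
  "par m i = (if i \<le> m then 0 else 1)"

text \<open>parity (mod 2) of the matrix unit e_ij, also of the generator x_ij\<close>
definition eP :: "nat \<Rightarrow> nat \<Rightarrow> nat \<Rightarrow> nat" where
  "eP m i j = (par m i + par m j) mod 2"

text \<open>Monomials: exponent functions on generators (i,j); elements: finitely supported
  complex linear combinations of monomials. Basis monomials have exponent \<le> 1 on odd
  generators; odd generators are ordered by the lexicographic order on pairs.\<close>
type_synonym smon = "(nat \<times> nat) \<Rightarrow>\<^sub>0 nat"
type_synonym salg = "smon \<Rightarrow>\<^sub>0 complex"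

definition oddgen :: "nat \<Rightarrow> nat \<times> nat \<Rightarrow> bool" where
  "oddgen m g = (eP m (fst g) (snd g) = 1)"

text \<open>sign (or 0) arising when multiplying the monomial a by the monomial b\<close>
definition msign :: "nat \<Rightarrow> smon \<Rightarrow> smon \<Rightarrow> complex" where
  "msign m a b = (if (\<exists>g \<in> Poly_Mapping.keys a \<inter> Poly_Mapping.keys b. oddgen m g) then 0
     else (-1) ^ card {(g, h). g \<in> Poly_Mapping.keys a \<and> h \<in> Poly_Mapping.keys b \<and> oddgen m g \<and> oddgen m h \<and> h < g})"

definition sprod :: "nat \<Rightarrow> salg \<Rightarrow> salg \<Rightarrow> salg" where
  "sprod m p q = (\<Sum>a\<in>Poly_Mapping.keys p. \<Sum>b\<in>Poly_Mapping.keys q.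
      Poly_Mapping.single (a + b) (Poly_Mapping.lookup p a * Poly_Mapping.lookup q b * msign m a b))"

definition sone :: salg where
  "sone = Poly_Mapping.single 0 1"

definition sscale :: "complex \<Rightarrow> salg \<Rightarrow> salg" where
  "sscale c p = (\<Sum>a\<in>Poly_Mapping.keys p. Poly_Mapping.single a (c * Poly_Mapping.lookup p a))"

definition gen :: "nat \<Rightarrow> nat \<Rightarrow> salg" where
  "gen i j = Poly_Mapping.single (Poly_Mapping.single (i, j) 1) 1"

definition sprod_list :: "nat \<Rightarrow> salg list \<Rightarrow> salg" where
  "sprod_list m xs = foldr (sprod m) xs sone"

text \<open>An element T = sum T^I_J \<otimes> e_(i1 j1) \<otimes> ... \<otimes> e_(ik jk) is represented by its
  coefficient function (I,J) \<mapsto> T^I_J, for I, J in idx m n k.\<close>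
type_synonym tens = "nat list \<Rightarrow> nat list \<Rightarrow> salg"

definition idx :: "nat \<Rightarrow> nat \<Rightarrow> nat \<Rightarrow> nat list set" where
  "idx m n k = {L. length L = k \<and> set L \<subseteq> {1..m+n}}"

text \<open>total parity of e_(i1 k1) \<otimes> ... \<otimes> e_(ik kk)\<close>
definition tpar :: "nat \<Rightarrow> nat list \<Rightarrow> nat list \<Rightarrow> nat" where
  "tpar m I K = (\<Sum>p<length I. eP m (I ! p) (K ! p))"

text \<open>sign exponent of (e_IK)(e_KJ) = (-1)^(...) e_IJ in the graded tensor product
  (a_1 \<otimes> ... \<otimes> a_k)(b_1 \<otimes> ... \<otimes> b_k) = (-1)^(sum_(p>q) |a_p||b_q|) a_1 b_1 \<otimes> ... \<otimes> a_k b_k\<close>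
definition cross :: "nat \<Rightarrow> nat list \<Rightarrow> nat list \<Rightarrow> nat list \<Rightarrow> nat" where
  "cross m I K J = (\<Sum>p<length I. \<Sum>q<p. eP m (I ! p) (K ! p) * eP m (K ! q) (J ! q))"

text \<open>Product S T in A \<otimes> End^{\<otimes>k} for even S, T (so the coefficient T^K_J has
  parity equal to that of e_KJ); sign rule (a \<otimes> b)(c \<otimes> d) = (-1)^(|b||c|) ac \<otimes> bd.\<close>
definition tmul :: "nat \<Rightarrow> nat \<Rightarrow> nat \<Rightarrow> tens \<Rightarrow> tens \<Rightarrow> tens" where
  "tmul m n k S T = (\<lambda>I J. \<Sum>K\<in>idx m n k.
      sscale ((-1) ^ (tpar m I K * tpar m K J + cross m I K J)) (sprod m (S I K) (T K J)))"

definition tone :: tens where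
  "tone = (\<lambda>I J. if I = J then sone else 0)"

text \<open>X_a (positions 0-based: a < k)\<close>
definition Xop :: "nat \<Rightarrow> nat \<Rightarrow> tens" where
  "Xop k a = (\<lambda>I J. if (\<forall>b<k. b \<noteq> a \<longrightarrow> I ! b = J ! b) then gen (I ! a) (J ! a) else 0)"

definition Xprod :: "nat \<Rightarrow> nat \<Rightarrow> nat \<Rightarrow> tens" where
  "Xprod m n k = foldl (tmul m n k) tone (map (Xop k) [0..<k])"

text \<open>Permutations of positions {0..<k}. Sign exponent I_sigma of the action
  sigma (e_j1 \<otimes> ... \<otimes> e_jk) = (-1)^(I_sigma) e_(j_sigma^-1(1)) \<otimes> ...\<close>
definition Ibar :: "nat \<Rightarrow> (nat \<Rightarrow> nat) \<Rightarrow> nat list \<Rightarrow> nat" where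
  "Ibar m \<sigma> J = (\<Sum>p<length J. \<Sum>q<length J.
      if p < q \<and> \<sigma> p > \<sigma> q then par m (J ! p) * par m (J ! q) else 0)"

text \<open>matrix entry: coefficient of e_I in sigma(e_J)\<close>
definition perm_mat :: "nat \<Rightarrow> (nat \<Rightarrow> nat) \<Rightarrow> nat list \<Rightarrow> nat list \<Rightarrow> complex" where
  "perm_mat m \<sigma> I J =
     (if I = map (\<lambda>p. J ! inv \<sigma> p) [0..<length J] then (-1) ^ Ibar m \<sigma> J else 0)"

text \<open>Identification End(V)^{\<otimes>k} = End(V^{\<otimes>k}) via the Koszul rule
  (f_1 \<otimes> ... \<otimes> f_k)(v_1 \<otimes> ... \<otimes> v_k) = (-1)^(sum_(p<q) |f_q||v_p|) f_1 v_1 \<otimes> ... \<otimes> f_k v_k,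
  so e_IJ (e_J) = (-1)^(sE I J) e_I.\<close>
definition sE :: "nat \<Rightarrow> nat list \<Rightarrow> nat list \<Rightarrow> nat" where
  "sE m I J = (\<Sum>q<length I. \<Sum>p<q. eP m (I ! q) (J ! q) * par m (J ! p))"

text \<open>an element sum_sigma chi(sigma) sigma of C[S_k], as the even element 1 \<otimes> (.)\<close>
definition chi_tens :: "nat \<Rightarrow> nat \<Rightarrow> nat \<Rightarrow> ((nat \<Rightarrow> nat) \<Rightarrow> complex) \<Rightarrow> tens" where
  "chi_tens m n k \<chi> = (\<lambda>I J. \<Sum>\<sigma>\<in>{\<sigma>. \<sigma> permutes {..<k}}.
      sscale (\<chi> \<sigma> * (-1) ^ sE m I J * perm_mat m \<sigma> I J) sone)"

definition gam :: "nat \<Rightarrow> nat list \<Rightarrow> nat list \<Rightarrow> nat" where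
  "gam m I J = (\<Sum>a<length I. par m (I ! a) * (par m (J ! a) + 1))
             + (\<Sum>b<length I. \<Sum>a<b. par m (J ! b) * (par m (I ! a) + par m (J ! a)))"

definition matel :: "nat \<Rightarrow> nat list \<Rightarrow> tens \<Rightarrow> nat list \<Rightarrow> salg" where
  "matel m I T J = sscale ((-1) ^ gam m I J) (T I J)"

definition Imm :: "nat \<Rightarrow> nat \<Rightarrow> ((nat \<Rightarrow> nat) \<Rightarrow> complex) \<Rightarrow> nat list \<Rightarrow> salg" where
  "Imm m n \<chi> I = (let k = length I in
     sscale ((-1) ^ (\<Sum>p<k. par m (I ! p)))
       (matel m I (tmul m n k (chi_tens m n k \<chi>) (Xprod m n k)) I))"

text \<open>chi^(1^j): the sign character; chi^(j): the trivial character\<close>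
definition chi_col :: "(nat \<Rightarrow> nat) \<Rightarrow> complex" where
  "chi_col \<sigma> = of_int (sign \<sigma>)"

definition chi_row :: "(nat \<Rightarrow> nat) \<Rightarrow> complex" where
  "chi_row \<sigma> = 1"

definition is_partition :: "nat list \<Rightarrow> nat \<Rightarrow> bool" where
  "is_partition lam k = (sorted (rev lam) \<and> (\<forall>x\<in>set lam. 0 < x) \<and> sum_list lam = k)"

text \<open>index (0-based) of the block of position p for the composition lam\<close>
definition blk :: "nat list \<Rightarrow> nat \<Rightarrow> nat" where
  "blk lam p = card {j. j < length lam \<and> sum_list (take (Suc j) lam) \<le> p}"

definition young :: "nat list \<Rightarrow> (nat \<Rightarrow> nat) set" where
  "young lam = {\<sigma>. \<sigma> permutes {..<sum_list lam} \<and> (\<forall>p<sum_list lam. blk lam (\<sigma> p) = blk lam p)}"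

definition ind_char :: "nat \<Rightarrow> (nat \<Rightarrow> nat) set \<Rightarrow> ((nat \<Rightarrow> nat) \<Rightarrow> complex)
    \<Rightarrow> (nat \<Rightarrow> nat) \<Rightarrow> complex" where
  "ind_char k H \<theta> g = (1 / of_nat (card H)) *
     (\<Sum>x\<in>{x. x permutes {..<k} \<and> inv x \<circ> g \<circ> x \<in> H}. \<theta> (inv x \<circ> g \<circ> x))"

definition psi :: "nat list \<Rightarrow> (nat \<Rightarrow> nat) \<Rightarrow> complex" where
  "psi lam = ind_char (sum_list lam) (young lam) (\<lambda>\<tau>. of_int (sign \<tau>))"

definition phi :: "nat list \<Rightarrow> (nat \<Rightarrow> nat) \<Rightarrow> complex" where
  "phi lam = ind_char (sum_list lam) (young lam) (\<lambda>\<tau>. 1)"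

definition alpha :: "nat list \<Rightarrow> nat" where
  "alpha I = (\<Prod>i\<in>set I. fact (count_list I i))"

definition decomps :: "nat \<Rightarrow> nat \<Rightarrow> nat list \<Rightarrow> nat list \<Rightarrow> nat list list set" where
  "decomps m n lam I = {Is. length Is = length lam \<and>
     (\<forall>j<length lam. sorted (Is ! j) \<and> length (Is ! j) = lam ! j \<and> set (Is ! j) \<subseteq> {1..m+n})
     \<and> mset (concat Is) = mset I}"

end

theory Submission
  imports Defs "HOL-Combinatorics.Multiset_Permutations"
begin

lemma keys_add_nat: "Poly_Mapping.keys (f + g :: 'a \<Rightarrow>\<^sub>0 nat) = Poly_Mapping.keys f \<union> Poly_Mapping.keys g"
  by (auto simp: in_keys_iff lookup_add)

lemma sscale_eq: "sscale c p = Poly_Mapping.map ((*) c) p"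
proof (rule poly_mapping_eqI)
  fix k
  have "Poly_Mapping.lookup (sscale c p) k = (\<Sum>a\<in>Poly_Mapping.keys p. (c * Poly_Mapping.lookup p a when a = k))"
    by (simp add: sscale_def lookup_sum lookup_single)
  also have "\<dots> = c * Poly_Mapping.lookup p k"
    by (cases "k \<in> Poly_Mapping.keys p") (auto simp: when_def in_keys_iff)
  finally show "Poly_Mapping.lookup (sscale c p) k = Poly_Mapping.lookup (Poly_Mapping.map ((*) c) p) k"
    by (simp add: map.rep_eq when_def)
qed

lemma lookup_sscale [simp]: "Poly_Mapping.lookup (sscale c p) k = c * Poly_Mapping.lookup p k"
  by (simp add: sscale_eq map.rep_eq when_def)

lemma sscale_add: "sscale c (p + q) = sscale c p + sscale c q"
  by (rule poly_mapping_eqI) (simp add: lookup_add algebra_simps)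

lemma sscale_add_left: "sscale (c + d) p = sscale c p + sscale d p"
  by (rule poly_mapping_eqI) (simp add: lookup_add algebra_simps)

lemma sscale_zero [simp]: "sscale c 0 = 0"
  by (rule poly_mapping_eqI) simp

lemma sscale_zero_left [simp]: "sscale 0 p = 0"
  by (rule poly_mapping_eqI) simp

lemma sscale_one [simp]: "sscale 1 p = p"
  by (rule poly_mapping_eqI) simp

lemma sscale_sscale [simp]: "sscale c (sscale d p) = sscale (c * d) p"
  by (rule poly_mapping_eqI) (simp add: algebra_simps)

lemma sscale_sum: "sscale c (sum f A) = (\<Sum>x\<in>A. sscale c (f x))"
  by (rule poly_mapping_eqI) (simp add: lookup_sum sum_distrib_left)

lemma sscale_sum_left: "sscale (sum f A) p = (\<Sum>x\<in>A. sscale (f x) p)"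
  by (rule poly_mapping_eqI) (simp add: lookup_sum sum_distrib_right)

lemma sscale_single [simp]: "sscale c (Poly_Mapping.single a d) = Poly_Mapping.single a (c * d)"
  by (rule poly_mapping_eqI) (simp add: lookup_single when_def)

lemma sprod_gen:
  assumes "finite A" "finite B" "Poly_Mapping.keys p \<subseteq> A" "Poly_Mapping.keys q \<subseteq> B"
  shows "sprod m p q = (\<Sum>a\<in>A. \<Sum>b\<in>B.
      Poly_Mapping.single (a + b) (Poly_Mapping.lookup p a * Poly_Mapping.lookup q b * msign m a b))"
proof -
  have "sprod m p q = (\<Sum>a\<in>A. \<Sum>b\<in>Poly_Mapping.keys q.
      Poly_Mapping.single (a + b) (Poly_Mapping.lookup p a * Poly_Mapping.lookup q b * msign m a b))"
    unfolding sprod_def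
    by (rule sum.mono_neutral_left) (use assms in \<open>auto simp: in_keys_iff\<close>)
  also have "\<dots> = (\<Sum>a\<in>A. \<Sum>b\<in>B.
      Poly_Mapping.single (a + b) (Poly_Mapping.lookup p a * Poly_Mapping.lookup q b * msign m a b))"
    by (intro sum.cong refl sum.mono_neutral_left) (use assms in \<open>auto simp: in_keys_iff\<close>)
  finally show ?thesis .
qed

lemma sprod_add_left: "sprod m (p + q) r = sprod m p r + sprod m q r"
proof -
  let ?A = "Poly_Mapping.keys p \<union> Poly_Mapping.keys q" and ?B = "Poly_Mapping.keys r"
  have k: "Poly_Mapping.keys (p + q) \<subseteq> ?A" by (rule keys_add)
  show ?thesis
    apply (subst sprod_gen[of ?A ?B], auto simp: k)[1]
    apply (subst sprod_gen[of ?A ?B p], auto)[1]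
    apply (subst sprod_gen[of ?A ?B q], auto)[1]
    apply (simp add: lookup_add distrib_right single_add sum.distrib)
    done
qed

lemma sprod_add_right: "sprod m r (p + q) = sprod m r p + sprod m r q"
proof -
  let ?B = "Poly_Mapping.keys p \<union> Poly_Mapping.keys q" and ?A = "Poly_Mapping.keys r"
  have k: "Poly_Mapping.keys (p + q) \<subseteq> ?B" by (rule keys_add)
  show ?thesis
    apply (subst sprod_gen[of ?A ?B], auto simp: k)[1]
    apply (subst sprod_gen[of ?A ?B _ p], auto)[1]
    apply (subst sprod_gen[of ?A ?B _ q], auto)[1]
    apply (simp add: lookup_add distrib_right distrib_left single_add sum.distrib)
    done
qed

lemma sprod_zero_left [simp]: "sprod m 0 q = 0"
  by (simp add: sprod_def)

lemma sprod_zero_right [simp]: "sprod m p 0 = 0"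
  by (simp add: sprod_def)

lemma sprod_sum_left: "sprod m (sum f A) q = (\<Sum>x\<in>A. sprod m (f x) q)"
  by (induction A rule: infinite_finite_induct) (auto simp: sprod_add_left)

lemma sprod_sum_right: "sprod m q (sum f A) = (\<Sum>x\<in>A. sprod m q (f x))"
  by (induction A rule: infinite_finite_induct) (auto simp: sprod_add_right)

lemma sprod_sscale_left: "sprod m (sscale c p) q = sscale c (sprod m p q)"
proof -
  have k: "Poly_Mapping.keys (sscale c p) \<subseteq> Poly_Mapping.keys p" by (auto simp: in_keys_iff)
  show ?thesis
    apply (subst sprod_gen[of "Poly_Mapping.keys p" "Poly_Mapping.keys q"], auto simp: k)[1]
    apply (subst sprod_gen[of "Poly_Mapping.keys p" "Poly_Mapping.keys q" p], auto)[1]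
    apply (simp add: sscale_sum mult.assoc)
    done
qed

lemma sprod_sscale_right: "sprod m p (sscale c q) = sscale c (sprod m p q)"
proof -
  have k: "Poly_Mapping.keys (sscale c q) \<subseteq> Poly_Mapping.keys q" by (auto simp: in_keys_iff)
  show ?thesis
    apply (subst sprod_gen[of "Poly_Mapping.keys p" "Poly_Mapping.keys q"], auto simp: k)[1]
    apply (subst sprod_gen[of "Poly_Mapping.keys p" "Poly_Mapping.keys q" p], auto)[1]
    apply (simp add: sscale_sum algebra_simps)
    done
qed

lemma sprod_single_single:
  "sprod m (Poly_Mapping.single a c) (Poly_Mapping.single b d) = Poly_Mapping.single (a + b) (c * d * msign m a b)"
  by (subst sprod_gen[of "{a}" "{b}"]) auto

lemma msign_zero_left [simp]: "msign m 0 b = 1"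
  by (simp add: msign_def)

lemma msign_zero_right [simp]: "msign m a 0 = 1"
  by (simp add: msign_def)

lemma sone_sprod [simp]: "sprod m sone p = p"
proof -
  have "sprod m sone p = (\<Sum>b\<in>Poly_Mapping.keys p. Poly_Mapping.single b (Poly_Mapping.lookup p b))"
    unfolding sone_def by (subst sprod_gen[of "{0}" "Poly_Mapping.keys p"]) auto
  also have "\<dots> = p"
    by (rule poly_mapping_eqI) (auto simp: lookup_sum lookup_single when_def in_keys_iff
        intro: sum.neutral split: if_splits)
  finally show ?thesis .
qed

lemma sprod_sone [simp]: "sprod m p sone = p"
proof -
  have "sprod m p sone = (\<Sum>b\<in>Poly_Mapping.keys p. Poly_Mapping.single b (Poly_Mapping.lookup p b))"
    unfolding sone_def by (subst sprod_gen[of "Poly_Mapping.keys p" "{0}"]) auto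
  also have "\<dots> = p"
    by (rule poly_mapping_eqI) (auto simp: lookup_sum lookup_single when_def in_keys_iff
        intro: sum.neutral split: if_splits)
  finally show ?thesis .
qed

lemma sone_sscale: "sscale c sone = Poly_Mapping.single 0 c"
  unfolding sone_def sscale_single by simp


definition gl :: "nat \<Rightarrow> (nat \<times> nat) list \<Rightarrow> salg" where
  "gl m gs = sprod_list m (map (\<lambda>g. gen (fst g) (snd g)) gs)"

definition monl :: "(nat \<times> nat) list \<Rightarrow> smon" where
  "monl gs = sum_list (map (\<lambda>g. Poly_Mapping.single g (1::nat)) gs)"

fun cgl :: "nat \<Rightarrow> (nat \<times> nat) list \<Rightarrow> complex" where
  "cgl m [] = 1"
| "cgl m (g # gs) = msign m (Poly_Mapping.single g 1) (monl gs) * cgl m gs"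

lemma monl_Nil [simp]: "monl [] = 0" by (simp add: monl_def)
lemma monl_Cons [simp]: "monl (g # gs) = Poly_Mapping.single g 1 + monl gs" by (simp add: monl_def)
lemma monl_append [simp]: "monl (gs @ hs) = monl gs + monl hs" by (simp add: monl_def)

lemma keys_monl [simp]: "Poly_Mapping.keys (monl gs) = set gs"
  by (induction gs) (auto simp: keys_add_nat)

lemma gl_eq: "gl m gs = Poly_Mapping.single (monl gs) (cgl m gs)"
proof (induction gs)
  case Nil
  then show ?case by (simp add: gl_def sprod_list_def sone_def)
next
  case (Cons g gs)
  have "gl m (g # gs) = sprod m (gen (fst g) (snd g)) (gl m gs)"
    by (simp add: gl_def sprod_list_def)
  also have "\<dots> = Poly_Mapping.single (monl (g # gs)) (cgl m (g # gs))"
    unfolding Cons gen_def by (simp add: sprod_single_single mult.commute)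
  finally show ?case .
qed

lemma gl_Nil [simp]: "gl m [] = sone" by (simp add: gl_def sprod_list_def)

lemma gl_Cons: "gl m (g # gs) = sprod m (gen (fst g) (snd g)) (gl m gs)"
  by (simp add: gl_def sprod_list_def)

lemma msign_assoc: "msign m a (b + c) * msign m b c = msign m a b * msign m (a + b) c"
proof -
  let ?A = "Poly_Mapping.keys a" and ?B = "Poly_Mapping.keys b" and ?C = "Poly_Mapping.keys c"
  have kbc: "Poly_Mapping.keys (b + c) = ?B \<union> ?C" and kab: "Poly_Mapping.keys (a + b) = ?A \<union> ?B"
    by (simp_all add: keys_add_nat)
  define P where "P = (\<lambda>X Y. {(g, h). g \<in> X \<and> h \<in> Y \<and> oddgen m g \<and> oddgen m h \<and> h < g})"
  have fin: "finite (P X Y)" if "finite X" "finite Y" for X Y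
    by (rule finite_subset[of _ "X \<times> Y"]) (use that in \<open>auto simp: P_def\<close>)
  show ?thesis
  proof (cases "(\<exists>g \<in> ?A \<inter> (?B \<union> ?C). oddgen m g) \<or> (\<exists>g \<in> ?B \<inter> ?C. oddgen m g)")
    case True
    then have "(\<exists>g \<in> ?A \<inter> ?B. oddgen m g) \<or> (\<exists>g \<in> (?A \<union> ?B) \<inter> ?C. oddgen m g)" by blast
    with True show ?thesis unfolding msign_def kbc kab by auto
  next
    case False
    then have F2: "\<not> ((\<exists>g \<in> ?A \<inter> ?B. oddgen m g) \<or> (\<exists>g \<in> (?A \<union> ?B) \<inter> ?C. oddgen m g))" by blast
    have e1: "P ?A (?B \<union> ?C) = P ?A ?B \<union> P ?A ?C" and e2: "P (?A \<union> ?B) ?C = P ?A ?C \<union> P ?B ?C"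
      by (auto simp: P_def)
    have d1: "P ?A ?B \<inter> P ?A ?C = {}" and d2: "P ?A ?C \<inter> P ?B ?C = {}"
      using False by (auto simp: P_def)
    have c1: "card (P ?A (?B \<union> ?C)) = card (P ?A ?B) + card (P ?A ?C)"
      unfolding e1 by (rule card_Un_disjoint) (auto intro!: fin simp: d1)
    have c2: "card (P (?A \<union> ?B) ?C) = card (P ?A ?C) + card (P ?B ?C)"
      unfolding e2 by (rule card_Un_disjoint) (auto intro!: fin simp: d2)
    have "msign m a (b + c) * msign m b c = (-1) ^ (card (P ?A (?B \<union> ?C)) + card (P ?B ?C))"
      using False unfolding msign_def kbc P_def by (simp add: power_add)
    also have "\<dots> = (-1) ^ (card (P ?A ?B) + card (P (?A \<union> ?B) ?C))"
      unfolding c1 c2 by (simp add: algebra_simps)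
    also have "\<dots> = msign m a b * msign m (a + b) c"
      using F2 unfolding msign_def kab P_def by (simp add: power_add)
    finally show ?thesis .
  qed
qed

lemma cgl_append: "cgl m (gs @ hs) = cgl m gs * cgl m hs * msign m (monl gs) (monl hs)"
proof (induction gs)
  case Nil
  then show ?case by simp
next
  case (Cons g gs)
  have "cgl m ((g # gs) @ hs) = msign m (Poly_Mapping.single g 1) (monl gs + monl hs) * cgl m (gs @ hs)"
    by simp
  also have "\<dots> = cgl m gs * cgl m hs * (msign m (Poly_Mapping.single g 1) (monl gs + monl hs) * msign m (monl gs) (monl hs))"
    unfolding Cons by (simp add: algebra_simps)
  also have "\<dots> = cgl m gs * cgl m hs * (msign m (Poly_Mapping.single g 1) (monl gs) * msign m (Poly_Mapping.single g 1 + monl gs) (monl hs))"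
    by (simp add: msign_assoc)
  also have "\<dots> = cgl m (g # gs) * cgl m hs * msign m (monl (g # gs)) (monl hs)"
    by (simp add: algebra_simps)
  finally show ?case .
qed

lemma gl_append: "gl m (gs @ hs) = sprod m (gl m gs) (gl m hs)"
  by (simp add: gl_eq sprod_single_single cgl_append)

lemma gl_snoc: "gl m (gs @ [g]) = sprod m (gl m gs) (gen (fst g) (snd g))"
  by (simp add: gl_append gl_Cons)


lemma sum_ind_card: "finite A \<Longrightarrow> (\<Sum>x\<in>A. if P x then 1 else 0 :: nat) = card {x\<in>A. P x}"
  by (simp add: sum.If_cases Int_def)

definition dodd :: "nat \<Rightarrow> (nat \<times> nat) list \<Rightarrow> bool" where
  "dodd m gs \<longleftrightarrow> (\<forall>p<length gs. \<forall>q<length gs. p \<noteq> q \<longrightarrow> oddgen m (gs ! p) \<longrightarrow> gs ! p \<noteq> gs ! q)"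

definition invs :: "nat \<Rightarrow> (nat \<times> nat) list \<Rightarrow> nat" where
  "invs m gs = (\<Sum>p<length gs. \<Sum>q<length gs.
     if p < q \<and> oddgen m (gs ! p) \<and> oddgen m (gs ! q) \<and> gs ! q < gs ! p then 1 else 0)"

lemma dodd_Nil [simp]: "dodd m []" by (simp add: dodd_def)

lemma dodd_Cons: "dodd m (g # gs) \<longleftrightarrow> (oddgen m g \<longrightarrow> g \<notin> set gs) \<and> dodd m gs"
proof
  assume d: "dodd m (g # gs)"
  have "g \<notin> set gs" if "oddgen m g"
  proof
    assume "g \<in> set gs"
    then obtain q where "q < length gs" "gs ! q = g" by (auto simp: in_set_conv_nth)
    with d that show False unfolding dodd_def
      by (metis Suc_less_eq length_Cons nat.distinct(1) nth_Cons_0 nth_Cons_Suc zero_less_Suc)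
  qed
  moreover have "dodd m gs"
    unfolding dodd_def
  proof (intro allI impI)
    fix p q assume "p < length gs" "q < length gs" "p \<noteq> q" "oddgen m (gs ! p)"
    with d show "gs ! p \<noteq> gs ! q" unfolding dodd_def
      by (metis Suc_less_eq length_Cons nat.inject nth_Cons_Suc)
  qed
  ultimately show "(oddgen m g \<longrightarrow> g \<notin> set gs) \<and> dodd m gs" by blast
next
  assume a: "(oddgen m g \<longrightarrow> g \<notin> set gs) \<and> dodd m gs"
  show "dodd m (g # gs)"
    unfolding dodd_def
  proof (intro allI impI)
    fix p q assume pq: "p < length (g # gs)" "q < length (g # gs)" "p \<noteq> q" "oddgen m ((g # gs) ! p)"
    show "(g # gs) ! p \<noteq> (g # gs) ! q"
    proof (cases p)
      case 0
      then obtain q' where q': "q = Suc q'" using pq by (cases q) auto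
      then show ?thesis using a pq 0 by (auto simp: nth_mem)
    next
      case (Suc p')
      show ?thesis
      proof (cases q)
        case 0
        then show ?thesis using a pq Suc by (auto simp: nth_mem)
      next
        case (Suc q')
        then show ?thesis using a pq \<open>p = Suc p'\<close> unfolding dodd_def by auto
      qed
    qed
  qed
qed

lemma invs_Nil [simp]: "invs m [] = 0" by (simp add: invs_def)

lemma invs_Cons: "invs m (g # gs) =
   (\<Sum>q<length gs. if oddgen m g \<and> oddgen m (gs ! q) \<and> gs ! q < g then 1 else 0) + invs m gs"
  unfolding invs_def length_Cons sum.lessThan_Suc_shift by (simp del: sum.lessThan_Suc add: sum.distrib)

lemma msign_single: "msign m (Poly_Mapping.single g 1) B =
   (if oddgen m g \<and> g \<in> Poly_Mapping.keys B then 0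
    else if oddgen m g then (-1) ^ card {h \<in> Poly_Mapping.keys B. oddgen m h \<and> h < g} else 1)"
proof -
  have e: "{(g', h). g' = g \<and> h \<in> Poly_Mapping.keys B \<and> oddgen m g' \<and> oddgen m h \<and> h < g'}
      = (if oddgen m g then (\<lambda>h. (g, h)) ` {h \<in> Poly_Mapping.keys B. oddgen m h \<and> h < g} else {})"
    by auto
  show ?thesis
    unfolding msign_def by (simp add: e card_image inj_on_def)
qed

lemma msign_single': "msign m (Poly_Mapping.single g (Suc 0)) B =
   (if oddgen m g \<and> g \<in> Poly_Mapping.keys B then 0
    else if oddgen m g then (-1) ^ card {h \<in> Poly_Mapping.keys B. oddgen m h \<and> h < g} else 1)"
  using msign_single[of m g B] by simp

lemma count_card:
  assumes "dodd m gs"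
  shows "(\<Sum>q<length gs. if oddgen m (gs ! q) \<and> gs ! q < g then 1 else 0) =
         card {h \<in> set gs. oddgen m h \<and> h < g}"
proof -
  have "(\<Sum>q<length gs. if oddgen m (gs ! q) \<and> gs ! q < g then 1 else 0) =
        card {q \<in> {..<length gs}. oddgen m (gs ! q) \<and> gs ! q < g}"
    by (rule sum_ind_card) simp
  also have "\<dots> = card ((\<lambda>q. gs ! q) ` {q \<in> {..<length gs}. oddgen m (gs ! q) \<and> gs ! q < g})"
    by (rule card_image[symmetric]) (use assms in \<open>auto simp: inj_on_def dodd_def\<close>)
  also have "(\<lambda>q. gs ! q) ` {q \<in> {..<length gs}. oddgen m (gs ! q) \<and> gs ! q < g} =
             {h \<in> set gs. oddgen m h \<and> h < g}"
    by (auto simp: in_set_conv_nth image_iff) (metis)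
  finally show ?thesis .
qed

lemma cgl_closed: "cgl m gs = (if dodd m gs then (-1) ^ invs m gs else 0)"
proof (induction gs)
  case Nil
  then show ?case by simp
next
  case (Cons g gs)
  show ?case
  proof (cases "dodd m gs")
    case False
    then show ?thesis using Cons by (simp add: dodd_Cons)
  next
    case True
    show ?thesis
    proof (cases "oddgen m g")
      case og: True
      show ?thesis
      proof (cases "g \<in> set gs")
        case True
        then show ?thesis using og by (simp add: msign_single' dodd_Cons)
      next
        case False
        then show ?thesis using og \<open>dodd m gs\<close> Cons
          by (simp add: msign_single' dodd_Cons invs_Cons count_card power_add)
      qed
    next
      case False
      then show ?thesis using \<open>dodd m gs\<close> Cons
        by (simp add: msign_single' dodd_Cons invs_Cons)
    qed
  qed
qed


lemma neg1_pow_eq: "even (a + b) \<Longrightarrow> (-1::complex) ^ a = (-1) ^ b"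
  by (metis even_add neg_one_even_power neg_one_odd_power)

lemma triangle_sum:
  fixes n :: nat
  shows "(\<Sum>q<n. \<Sum>p<q. f p q) = (\<Sum>p<n. \<Sum>q<n. if p < q then f p q else (0::'a::comm_monoid_add))"
proof -
  have "(\<Sum>q<n. \<Sum>p<q. f p q) = (\<Sum>q<n. \<Sum>p<n. if p < q then f p q else 0)"
  proof (rule sum.cong[OF refl])
    fix q assume "q \<in> {..<n}"
    then have e: "{..<n} \<inter> {p. p < q} = {..<q}" by (auto simp: lessThan_def)
    show "(\<Sum>p<q. f p q) = (\<Sum>p<n. if p < q then f p q else 0)"
      by (simp add: sum.If_cases e)
  qed
  also have "\<dots> = (\<Sum>p<n. \<Sum>q<n. if p < q then f p q else 0)"
    by (rule sum.swap)
  finally show ?thesis .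
qed

lemma double_reindex:
  assumes "x permutes {..<n}"
  shows "(\<Sum>p<n. \<Sum>q<n. G (x p) (x q)) = (\<Sum>a<n. \<Sum>b<n. (G a b :: 'a::comm_monoid_add))"
proof -
  have bij: "bij_betw x {..<n} {..<n}" using assms by (rule permutes_imp_bij)
  have "(\<Sum>p<n. \<Sum>q<n. G (x p) (x q)) = (\<Sum>p<n. \<Sum>b<n. G (x p) b)"
    by (intro sum.cong refl sum.reindex_bij_betw[OF bij])
  also have "\<dots> = (\<Sum>a<n. \<Sum>b<n. G a b)"
    by (rule sum.reindex_bij_betw[OF bij, where g = "\<lambda>a. \<Sum>b<n. G a b"])
  finally show ?thesis .
qed

lemma pairsum_reindex:
  fixes F :: "nat \<Rightarrow> nat \<Rightarrow> nat"
  assumes x: "x permutes {..<n}"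
  shows "(\<Sum>p<n. \<Sum>q<n. if p < q then F (x p) (x q) else 0) + (\<Sum>a<n. \<Sum>b<n. if a < b then F a b else 0)
   = 2 * (\<Sum>a<n. \<Sum>b<n. if a < b \<and> inv x a < inv x b then F a b else 0)
     + (\<Sum>a<n. \<Sum>b<n. if a < b \<and> inv x b < inv x a then F a b + F b a else 0)"
proof -
  let ?i = "inv x"
  have ii: "?i (x p) = p" for p using x by (simp add: permutes_inverses(2))
  have inj: "?i a \<noteq> ?i b" if "a \<noteq> b" for a b
    using that x by (metis permutes_inverses(1))
  define G where "G a b = (if ?i a < ?i b then F a b else 0)" for a b
  have "(\<Sum>p<n. \<Sum>q<n. if p < q then F (x p) (x q) else 0) = (\<Sum>p<n. \<Sum>q<n. G (x p) (x q))"
    by (simp add: G_def ii)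
  also have "\<dots> = (\<Sum>a<n. \<Sum>b<n. G a b)" by (rule double_reindex[OF x])
  also have "\<dots> = (\<Sum>a<n. \<Sum>b<n. (if a < b \<and> ?i a < ?i b then F a b else 0) + (if b < a \<and> ?i a < ?i b then F a b else 0))"
    by (intro sum.cong refl) (auto simp: G_def)
  also have "\<dots> = (\<Sum>a<n. \<Sum>b<n. if a < b \<and> ?i a < ?i b then F a b else 0) + (\<Sum>a<n. \<Sum>b<n. if b < a \<and> ?i a < ?i b then F a b else 0)"
    by (simp add: sum.distrib)
  also have "(\<Sum>a<n. \<Sum>b<n. if b < a \<and> ?i a < ?i b then F a b else 0) = (\<Sum>a<n. \<Sum>b<n. if a < b \<and> ?i b < ?i a then F b a else 0)"
    by (rule sum.swap)
  finally have L: "(\<Sum>p<n. \<Sum>q<n. if p < q then F (x p) (x q) else 0) =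
     (\<Sum>a<n. \<Sum>b<n. if a < b \<and> ?i a < ?i b then F a b else 0) + (\<Sum>a<n. \<Sum>b<n. if a < b \<and> ?i b < ?i a then F b a else 0)" .
  have R: "(\<Sum>a<n. \<Sum>b<n. if a < b then F a b else 0) =
     (\<Sum>a<n. \<Sum>b<n. if a < b \<and> ?i a < ?i b then F a b else 0) + (\<Sum>a<n. \<Sum>b<n. if a < b \<and> ?i b < ?i a then F a b else 0)"
  proof -
    have "(\<Sum>a<n. \<Sum>b<n. if a < b then F a b else 0) = (\<Sum>a<n. \<Sum>b<n. (if a < b \<and> ?i a < ?i b then F a b else 0) + (if a < b \<and> ?i b < ?i a then F a b else 0))"
    proof (intro sum.cong refl)
      fix a b
      show "(if a < b then F a b else 0) = (if a < b \<and> ?i a < ?i b then F a b else 0) + (if a < b \<and> ?i b < ?i a then F a b else 0)"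
        using inj[of a b] by (cases "a < b") auto
    qed
    then show ?thesis by (simp add: sum.distrib)
  qed
  have M: "(\<Sum>a<n. \<Sum>b<n. if a < b \<and> ?i b < ?i a then F a b + F b a else 0) =
     (\<Sum>a<n. \<Sum>b<n. if a < b \<and> ?i b < ?i a then F b a else 0) + (\<Sum>a<n. \<Sum>b<n. if a < b \<and> ?i b < ?i a then F a b else 0)"
    by (simp add: sum.distrib[symmetric] if_distrib add.commute cong: if_cong)
  show ?thesis unfolding L R M by simp
qed

lemma pairsum_even:
  fixes F :: "nat \<Rightarrow> nat \<Rightarrow> nat"
  assumes x: "x permutes {..<n}"
  shows "even ((\<Sum>p<n. \<Sum>q<n. if p < q then F (x p) (x q) else 0) + (\<Sum>a<n. \<Sum>b<n. if a < b then F a b else 0)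
     + (\<Sum>a<n. \<Sum>b<n. if a < b \<and> inv x b < inv x a then F a b + F b a else 0))"
  unfolding pairsum_reindex[OF x] by simp

lemma pairsum_sym_even:
  fixes F :: "nat \<Rightarrow> nat \<Rightarrow> nat"
  assumes x: "x permutes {..<n}" and sym: "\<And>a b. F a b = F b a"
  shows "even ((\<Sum>p<n. \<Sum>q<n. if p < q then F (x p) (x q) else 0) + (\<Sum>a<n. \<Sum>b<n. if a < b then F a b else 0))"
proof -
  have "(\<Sum>a<n. \<Sum>b<n. if a < b \<and> inv x b < inv x a then F a b + F b a else 0) =
        2 * (\<Sum>a<n. \<Sum>b<n. if a < b \<and> inv x b < inv x a then F a b else 0)"
    by (simp add: sum_distrib_left sym mult_2 if_distrib cong: if_cong)
  then show ?thesis using pairsum_even[OF x, of F] by simp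
qed


definition eM :: "nat \<Rightarrow> nat list \<Rightarrow> (nat \<Rightarrow> nat) \<Rightarrow> nat" where
  "eM m I \<sigma> = (\<Sum>p<length I. par m (I ! p)) + Ibar m \<sigma> (permute_list \<sigma> I) + sE m I (permute_list \<sigma> I)"

definition Mt :: "nat \<Rightarrow> nat list \<Rightarrow> (nat \<Rightarrow> nat) \<Rightarrow> salg" where
  "Mt m I \<sigma> = sscale ((-1) ^ eM m I \<sigma>) (gl m (zip (permute_list \<sigma> I) I))"

lemma pl_nth: "i < length xs \<Longrightarrow> permute_list f xs ! i = xs ! f i"
  by (simp add: permute_list_def)

lemma par_le1: "par m i \<le> 1" by (simp add: par_def)
lemma eP_sym: "eP m i j = eP m j i" by (simp add: eP_def add.commute)

lemma sum_list_perm: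
  assumes "x permutes {..<length ys}"
  shows "sum_list (permute_list x ys) = (sum_list ys :: 'a::comm_monoid_add)"
proof -
  have "sum_list (permute_list x ys) = sum_mset (mset (permute_list x ys))" by (simp add: sum_mset_sum_list)
  also have "\<dots> = sum_mset (mset ys)" using assms by (simp only: mset_permute_list)
  also have "\<dots> = sum_list ys" by (simp add: sum_mset_sum_list)
  finally show ?thesis .
qed

lemma monl_perm:
  assumes "x permutes {..<length gs}"
  shows "monl (permute_list x gs) = monl gs"
proof -
  have "map (\<lambda>g. Poly_Mapping.single g (1::nat)) (permute_list x gs) = permute_list x (map (\<lambda>g. Poly_Mapping.single g (1::nat)) gs)"
    by (rule permute_list_map[OF assms, symmetric])
  then show ?thesis unfolding monl_def using sum_list_perm[of x "map (\<lambda>g. Poly_Mapping.single g (1::nat)) gs"] assms by simp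
qed

lemma dodd_perm:
  assumes x: "x permutes {..<length gs}"
  shows "dodd m (permute_list x gs) \<longleftrightarrow> dodd m gs"
proof -
  have xin: "x p < length gs" if "p < length gs" for p using x that by (metis lessThan_iff permutes_in_image)
  have xinj: "x p \<noteq> x q" if "p \<noteq> q" for p q using x that by (metis permutes_inj injD)
  have ex: "\<exists>p<length gs. x p = a" if "a < length gs" for a
  proof -
    have "inv x a < length gs" using that x by (metis lessThan_iff permutes_in_image permutes_inv)
    moreover have "x (inv x a) = a" using x by (simp add: permutes_inverses(1))
    ultimately show ?thesis by blast
  qed
  show ?thesis
  proof
    assume d: "dodd m (permute_list x gs)"
    show "dodd m gs" unfolding dodd_def
    proof (intro allI impI)
      fix a b assume ab: "a < length gs" "b < length gs" "a \<noteq> b" "oddgen m (gs ! a)"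
      obtain p where p: "p < length gs" "x p = a" using ex ab by blast
      obtain q where q: "q < length gs" "x q = b" using ex ab by blast
      have "p \<noteq> q" using p q ab by auto
      moreover have "oddgen m (permute_list x gs ! p)" using p ab by (simp add: pl_nth)
      ultimately have "permute_list x gs ! p \<noteq> permute_list x gs ! q"
        using d p q unfolding dodd_def by simp
      then show "gs ! a \<noteq> gs ! b" using p q by (simp add: pl_nth)
    qed
  next
    assume d: "dodd m gs"
    show "dodd m (permute_list x gs)" unfolding dodd_def
    proof (intro allI impI)
      fix p q assume pq: "p < length (permute_list x gs)" "q < length (permute_list x gs)" "p \<noteq> q"
        "oddgen m (permute_list x gs ! p)"
      then show "permute_list x gs ! p \<noteq> permute_list x gs ! q"
        using d xin xinj[of p q] unfolding dodd_def by (simp add: pl_nth)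
    qed
  qed
qed

lemma ev_add: "even (a::nat) \<Longrightarrow> even b \<Longrightarrow> even (a + b)" by simp

lemma ev_cancel: "even ((a::nat) + 2 * b) \<Longrightarrow> even a" by simp

lemma Mt_conj:
  assumes x: "x permutes {..<length I}" and t: "\<tau> permutes {..<length I}"
  shows "Mt m (permute_list x I) (inv x \<circ> \<tau> \<circ> x) = Mt m I \<tau>"
proof -
  define n where "n = length I"
  note x = x[folded n_def] and t = t[folded n_def]
  define J where "J = permute_list x I"
  define h where "h = inv x \<circ> \<tau> \<circ> x"
  define K where "K = permute_list \<tau> I"
  define K' where "K' = permute_list h J"
  define gs where "gs = zip K I"
  have lJ: "length J = n" and lK: "length K = n" and lK': "length K' = n" and lgs: "length gs = n"
    by (simp_all add: J_def K_def K'_def gs_def n_def)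
  have lI: "length I = n" by (simp add: n_def)
  have xin: "x p < n" if "p < n" for p using x that by (metis lessThan_iff permutes_in_image)
  have tin: "\<tau> p < n" if "p < n" for p using t that by (metis lessThan_iff permutes_in_image)
  have xinv: "inv x (x p) = p" for p using x by (simp add: permutes_inverses(2))
  have xi: "x (inv x a) = a" for a using x by (simp add: permutes_inverses(1))
  have iin: "inv x a < n" if "a < n" for a using that x by (metis lessThan_iff permutes_in_image permutes_inv)
  have iinj: "inv x a \<noteq> inv x b" if "a \<noteq> b" for a b using that x by (metis permutes_inverses(1))
  have tinj: "\<tau> a \<noteq> \<tau> b" if "a \<noteq> b" for a b using that t by (metis permutes_inj injD)
  have Jn: "J ! p = I ! x p" if "p < n" for p using that by (simp add: J_def pl_nth n_def)
  have Kn: "K ! p = I ! \<tau> p" if "p < n" for p using that by (simp add: K_def pl_nth n_def)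
  have K'n: "K' ! p = I ! \<tau> (x p)" if "p < n" for p
    using that by (simp add: K'_def pl_nth lJ Jn h_def xinv xin tin iin xi)
  have gsn: "gs ! p = (I ! \<tau> p, I ! p)" if "p < n" for p using that by (simp add: gs_def Kn lK n_def)
  have gs': "zip K' J = permute_list x gs"
  proof -
    have "zip K' J = zip (permute_list x K) (permute_list x I)"
      by (rule nth_equalityI) (auto simp: lK' lJ lK lI pl_nth K'n Jn Kn xin)
    also have "\<dots> = permute_list x gs"
      unfolding gs_def using x by (simp add: permute_list_zip lK n_def)
    finally show ?thesis .
  qed
  define u where "u a = par m (I ! a)" for a
  define v where "v a = par m (I ! \<tau> a)" for a
  define e where "e a = eP m (I ! \<tau> a) (I ! a)" for a
  have u01: "u a \<le> 1" and v01: "v a \<le> 1" for a by (simp_all add: u_def v_def par_def)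
  have e_uv: "e a = (u a + v a) mod 2" for a by (simp add: e_def eP_def u_def v_def add.commute)
  have og: "oddgen m (gs ! a) \<longleftrightarrow> e a = 1" if "a < n" for a
    using that by (simp add: oddgen_def gsn e_def)
  define F1 where "F1 a b = (if inv x (\<tau> b) < inv x (\<tau> a) then v a * v b else 0)" for a b
  define F2 where "F2 a b = e b * v a" for a b
  define F3 where "F3 a b = (if oddgen m (gs ! a) \<and> oddgen m (gs ! b) \<and> gs ! b < gs ! a then 1 else 0 :: nat)" for a b
  define flp where "flp c d = ((inv x d < inv x c) \<noteq> (d < c))" for c d
  define F4 where "F4 c d = (if flp c d then u c * u d else 0)" for c d
  define PS where "PS F = (\<Sum>p<n. \<Sum>q<n. if p < q then F (x p) (x q) else 0 :: nat)" for F
  define RS where "RS F = (\<Sum>a<n. \<Sum>b<n. if a < b then F a b else 0 :: nat)" for F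
  define FS where "FS F = (\<Sum>a<n. \<Sum>b<n. if a < b \<and> inv x b < inv x a then F a b + F b a else 0 :: nat)" for F
  have pe: "even (PS F + RS F + FS F)" for F unfolding PS_def RS_def FS_def by (rule pairsum_even[OF x])
  have A1: "(\<Sum>p<length J. par m (J ! p)) = (\<Sum>a<n. u a)"
  proof -
    have "(\<Sum>p<length J. par m (J ! p)) = (\<Sum>p<n. u (x p))" by (simp add: lJ Jn u_def)
    also have "\<dots> = (\<Sum>a<n. u a)" by (rule sum.reindex_bij_betw[OF permutes_imp_bij[OF x]])
    finally show ?thesis .
  qed
  have A2: "Ibar m h K' = PS F1"
    unfolding Ibar_def PS_def lK'
    by (intro sum.cong refl) (auto simp: F1_def K'n v_def h_def xinv xin)
  have A3: "sE m J K' = PS F2"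
    unfolding sE_def PS_def lJ triangle_sum
    by (intro sum.cong refl) (auto simp: F2_def K'n Jn e_def v_def eP_sym xin)
  have B2: "Ibar m \<tau> K = (\<Sum>a<n. \<Sum>b<n. if a < b \<and> \<tau> b < \<tau> a then v a * v b else 0)"
    unfolding Ibar_def lK by (intro sum.cong refl) (auto simp: Kn v_def)
  have B3: "sE m I K = RS F2"
    unfolding sE_def RS_def triangle_sum n_def[symmetric]
    by (intro sum.cong refl) (auto simp: F2_def Kn e_def v_def eP_sym n_def)
  have I3: "invs m (permute_list x gs) = PS F3"
    unfolding invs_def PS_def using x
    by (intro sum.cong refl) (auto simp: F3_def lgs pl_nth xin)
  have I3': "invs m gs = RS F3"
    unfolding invs_def RS_def lgs by (intro sum.cong refl) (simp add: F3_def)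
  define C where "C = (\<Sum>a<n. \<Sum>b<n. if a < b \<and> flp (\<tau> a) (\<tau> b) then v a * v b else 0 :: nat)"
  have RC: "even (RS F1 + Ibar m \<tau> K + C)"
  proof -
    have "RS F1 + Ibar m \<tau> K + C = (\<Sum>a<n. \<Sum>b<n. (if a < b then F1 a b else 0) + (if a < b \<and> \<tau> b < \<tau> a then v a * v b else 0)
        + (if a < b \<and> flp (\<tau> a) (\<tau> b) then v a * v b else 0))"
      unfolding RS_def B2 C_def by (simp add: sum.distrib)
    also have "even \<dots>"
    proof (intro dvd_sum)
      fix a b
      show "even ((if a < b then F1 a b else 0) + (if a < b \<and> \<tau> b < \<tau> a then v a * v b else 0)
        + (if a < b \<and> flp (\<tau> a) (\<tau> b) then v a * v b else 0))"
        by (auto simp: F1_def flp_def)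
    qed
    finally show ?thesis .
  qed
  define D where "D = (\<Sum>a<n. \<Sum>b<n. if a < b \<and> inv x b < inv x a then u a * u b else 0 :: nat)"
  have CD: "even (C + D)"
  proof -
    have sym: "F4 c d = F4 d c" for c d
    proof (cases "c = d")
      case False
      then have "inv x c \<noteq> inv x d" by (rule iinj)
      then show ?thesis using False by (auto simp: F4_def flp_def mult.commute)
    qed simp
    have "even ((\<Sum>p<n. \<Sum>q<n. if p < q then F4 (\<tau> p) (\<tau> q) else 0) + (\<Sum>a<n. \<Sum>b<n. if a < b then F4 a b else 0))"
      by (rule pairsum_sym_even[OF t sym])
    moreover have "(\<Sum>p<n. \<Sum>q<n. if p < q then F4 (\<tau> p) (\<tau> q) else 0) = C"
      unfolding C_def by (intro sum.cong refl) (auto simp: F4_def u_def v_def)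
    moreover have "(\<Sum>a<n. \<Sum>b<n. if a < b then F4 a b else 0) = D"
      unfolding D_def by (intro sum.cong refl) (auto simp: F4_def flp_def)
    ultimately show ?thesis by simp
  qed
  have T: "even (FS F1 + FS F2 + FS F3 + D)" if dd: "dodd m gs"
  proof -
    have "FS F1 + FS F2 + FS F3 + D = (\<Sum>a<n. \<Sum>b<n. (if a < b \<and> inv x b < inv x a then F1 a b + F1 b a else 0)
       + (if a < b \<and> inv x b < inv x a then F2 a b + F2 b a else 0)
       + (if a < b \<and> inv x b < inv x a then F3 a b + F3 b a else 0)
       + (if a < b \<and> inv x b < inv x a then u a * u b else 0))"
      unfolding FS_def D_def by (simp add: sum.distrib)
    also have "even \<dots>"
    proof (intro dvd_sum)
      fix a b assume a: "a \<in> {..<n}" and b: "b \<in> {..<n}"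
      show "even ((if a < b \<and> inv x b < inv x a then F1 a b + F1 b a else 0)
       + (if a < b \<and> inv x b < inv x a then F2 a b + F2 b a else 0)
       + (if a < b \<and> inv x b < inv x a then F3 a b + F3 b a else 0)
       + (if a < b \<and> inv x b < inv x a then u a * u b else 0))"
      proof (cases "a < b \<and> inv x b < inv x a")
        case True
        then have ab: "a \<noteq> b" by auto
        have f1: "F1 a b + F1 b a = v a * v b"
          using iinj[OF tinj[OF ab]] by (auto simp: F1_def mult.commute)
        have f3: "F3 a b + F3 b a = (if e a = 1 \<and> e b = 1 then 1 else 0)"
        proof -
          have ne: "gs ! a \<noteq> gs ! b" if "oddgen m (gs ! a)"
            using dd ab a b that by (auto simp: dodd_def lgs)
          show ?thesis using ne og[of a] og[of b] a b
            by (auto simp: F3_def)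
        qed
        have "even (v a * v b + (e b * v a + e a * v b) + (if e a = 1 \<and> e b = 1 then 1 else 0) + u a * u b)"
          using u01[of a] u01[of b] v01[of a] v01[of b] e_uv[of a] e_uv[of b]
          by (auto simp: le_Suc_eq)
        then show ?thesis using True f1 f3 by (simp add: F2_def)
      next
        case False
        then show ?thesis by (simp only: if_False if_not_P) simp
      qed
    qed
    finally show ?thesis .
  qed
  have main: "(-1) ^ eM m J h * cgl m (permute_list x gs) = (-1) ^ eM m I \<tau> * cgl m gs"
  proof (cases "dodd m gs")
    case False
    then show ?thesis using dodd_perm[of x gs m] x by (simp add: cgl_closed lgs)
  next
    case True
    have "even (eM m J h + invs m (permute_list x gs) + (eM m I \<tau> + invs m gs))"
    proof -
      have eJ: "eM m J h = (\<Sum>a<n. u a) + PS F1 + PS F2"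
        unfolding eM_def A1 using A2 A3 by (simp add: K'_def)
      have eI: "eM m I \<tau> = (\<Sum>a<n. u a) + Ibar m \<tau> K + RS F2"
        unfolding eM_def B3[symmetric] by (simp add: K_def u_def n_def)
      have sum6: "(eM m J h + invs m (permute_list x gs) + (eM m I \<tau> + invs m gs))
         + 2 * (RS F1 + C + D + FS F1 + FS F2 + FS F3)
         = (PS F1 + RS F1 + FS F1) + (RS F1 + Ibar m \<tau> K + C) + (C + D) + (PS F2 + RS F2 + FS F2)
           + (PS F3 + RS F3 + FS F3) + (FS F1 + FS F2 + FS F3 + D) + 2 * (\<Sum>a<n. u a)"
        unfolding eJ eI I3 I3' by simp
      have "even ((PS F1 + RS F1 + FS F1) + (RS F1 + Ibar m \<tau> K + C) + (C + D) + (PS F2 + RS F2 + FS F2)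
           + (PS F3 + RS F3 + FS F3) + (FS F1 + FS F2 + FS F3 + D))"
        by (rule ev_add[OF ev_add[OF ev_add[OF ev_add[OF ev_add[OF pe[of F1] RC] CD] pe[of F2]] pe[of F3]] T[OF True]])
      then have "even ((PS F1 + RS F1 + FS F1) + (RS F1 + Ibar m \<tau> K + C) + (C + D) + (PS F2 + RS F2 + FS F2)
           + (PS F3 + RS F3 + FS F3) + (FS F1 + FS F2 + FS F3 + D) + 2 * (\<Sum>a<n. u a))"
        by (rule ev_add) simp
      then have "even ((eM m J h + invs m (permute_list x gs) + (eM m I \<tau> + invs m gs))
         + 2 * (RS F1 + C + D + FS F1 + FS F2 + FS F3))" unfolding sum6 .
      then show ?thesis by (rule ev_cancel)
    qed
    then have "(-1::complex) ^ (eM m J h + invs m (permute_list x gs)) = (-1) ^ (eM m I \<tau> + invs m gs)"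
      by (rule neg1_pow_eq)
    then show ?thesis using True dodd_perm[of x gs m] x
      by (simp add: cgl_closed lgs power_add)
  qed
  have "Mt m J h = Poly_Mapping.single (monl gs) ((-1) ^ eM m J h * cgl m (permute_list x gs))"
    unfolding Mt_def K'_def[symmetric] gs' gl_eq using monl_perm[of x gs] x by (simp add: lgs)
  also have "\<dots> = Mt m I \<tau>"
    unfolding Mt_def K_def[symmetric] gs_def[symmetric] gl_eq main by simp
  finally show ?thesis by (simp add: J_def h_def)
qed


definition EXs :: "nat \<Rightarrow> nat list \<Rightarrow> nat list \<Rightarrow> nat" where
  "EXs m I J = (\<Sum>p<length I. (\<Sum>q<p. eP m (I ! q) (J ! q)) * eP m (I ! p) (J ! p))"

lemma sum_collapse:
  assumes "finite A" "a \<in> A" "\<And>x. x \<in> A \<Longrightarrow> x \<noteq> a \<Longrightarrow> f x = 0"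
  shows "sum f A = f a"
proof -
  have "sum f A = f a + sum f (A - {a})" using assms by (simp add: sum.remove)
  also have "sum f (A - {a}) = 0" using assms by (intro sum.neutral) auto
  finally show ?thesis by simp
qed

lemma idx_iff: "K \<in> idx m n k \<longleftrightarrow> length K = k \<and> set K \<subseteq> {1..m+n}"
  by (simp add: idx_def)

lemma finite_idx [simp]: "finite (idx m n k)"
proof -
  have "idx m n k = {xs. set xs \<subseteq> {1..m+n} \<and> length xs = k}" by (auto simp: idx_def)
  then show ?thesis by (simp add: finite_lists_length_eq)
qed

lemma eP_same [simp]: "eP m i i = 0" by (simp add: eP_def)

lemma sum_upto_Suc:
  fixes f :: "nat \<Rightarrow> nat"
  assumes "r < k" "\<And>q. r < q \<Longrightarrow> q < k \<Longrightarrow> f q = 0"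
  shows "(\<Sum>q<k. f q) = (\<Sum>q<r. f q) + f r"
proof -
  have "(\<Sum>q<k. f q) = (\<Sum>q<Suc r. f q)"
    by (rule sum.mono_neutral_right) (use assms in auto)
  then show ?thesis by simp
qed

lemma Pr_formula:
  assumes "r \<le> k" "I \<in> idx m n k" "J \<in> idx m n k"
  shows "foldl (tmul m n k) tone (map (Xop k) [0..<r]) I J =
    (if (\<forall>p. r \<le> p \<and> p < k \<longrightarrow> I ! p = J ! p)
     then sscale ((-1) ^ EXs m I J) (gl m (zip (take r I) (take r J))) else 0)"
  using assms
proof (induction r arbitrary: I J)
  case 0
  then have lI: "length I = k" and lJ: "length J = k" by (auto simp: idx_def)
  show ?case
  proof (cases "I = J")
    case True
    have "EXs m I I = 0" by (simp add: EXs_def)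
    then show ?thesis using True by (simp add: tone_def)
  next
    case False
    have "\<not> (\<forall>p. 0 \<le> p \<and> p < k \<longrightarrow> I ! p = J ! p)"
    proof
      assume "\<forall>p. 0 \<le> p \<and> p < k \<longrightarrow> I ! p = J ! p"
      then have "I = J" by (intro nth_equalityI) (simp_all add: lI lJ)
      then show False using False by simp
    qed
    then show ?thesis using False by (auto simp: tone_def)
  qed
next
  case (Suc r)
  have rk: "r < k" using Suc by simp
  have lI: "length I = k" and lJ: "length J = k" using Suc by (auto simp: idx_def)
  have IH: "foldl (tmul m n k) tone (map (Xop k) [0..<r]) I' J' =
    (if (\<forall>p. r \<le> p \<and> p < k \<longrightarrow> I' ! p = J' ! p)
     then sscale ((-1) ^ EXs m I' J') (gl m (zip (take r I') (take r J'))) else 0)"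
    if "I' \<in> idx m n k" "J' \<in> idx m n k" for I' J'
    using Suc.IH[OF _ that] rk by simp
  define P where "P = foldl (tmul m n k) tone (map (Xop k) [0..<r])"
  have step: "foldl (tmul m n k) tone (map (Xop k) [0..<Suc r]) I J = tmul m n k P (Xop k r) I J"
    by (simp add: P_def)
  define T where "T K = sscale ((-1) ^ (tpar m I K * tpar m K J + cross m I K J)) (sprod m (P I K) (Xop k r K J))" for K
  have tm: "tmul m n k P (Xop k r) I J = (\<Sum>K\<in>idx m n k. T K)"
    by (simp add: tmul_def T_def)
  show ?case
  proof (cases "\<forall>p. Suc r \<le> p \<and> p < k \<longrightarrow> I ! p = J ! p")
    case False
    then obtain p where p: "Suc r \<le> p" "p < k" "I ! p \<noteq> J ! p" by blast
    have "T K = 0" if K: "K \<in> idx m n k" for K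
    proof -
      have "P I K = 0 \<or> Xop k r K J = 0"
      proof (rule ccontr)
        assume "\<not> (P I K = 0 \<or> Xop k r K J = 0)"
        then have a: "P I K \<noteq> 0" and b: "Xop k r K J \<noteq> 0" by auto
        from a have "I ! p = K ! p" using IH[OF Suc.prems(2) K] p unfolding P_def by (auto split: if_splits)
        moreover from b have "K ! p = J ! p" using p by (auto simp: Xop_def split: if_splits)
        ultimately show False using p by simp
      qed
      then show ?thesis by (auto simp: T_def)
    qed
    then have "tmul m n k P (Xop k r) I J = 0" unfolding tm by simp
    then show ?thesis using False step by auto
  next
    case True
    define K0 where "K0 = J[r := I ! r]"
    have lK0: "length K0 = k" by (simp add: K0_def lJ)
    have K0in: "K0 \<in> idx m n k"
    proof -
      have "I ! r \<in> set I" using rk lI by simp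
      then have "I ! r \<in> {1..m+n}" using Suc.prems(2) by (auto simp: idx_def)
      then show ?thesis using Suc.prems(3) lK0 set_update_subset_insert[of J r "I ! r"]
        by (auto simp: idx_def K0_def)
    qed
    have K0n: "K0 ! p = (if p = r then I ! r else J ! p)" if "p < k" for p
      using that by (simp add: K0_def lJ)
    have Tz: "T K = 0" if K: "K \<in> idx m n k" "K \<noteq> K0" for K
    proof -
      have lK: "length K = k" using K by (simp add: idx_def)
      have "P I K = 0 \<or> Xop k r K J = 0"
      proof (rule ccontr)
        assume "\<not> (P I K = 0 \<or> Xop k r K J = 0)"
        then have a: "P I K \<noteq> 0" and b: "Xop k r K J \<noteq> 0" by auto
        from a have "I ! r = K ! r" using IH[OF Suc.prems(2) K(1)] rk unfolding P_def by (auto split: if_splits)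
        moreover from b have "\<forall>b<k. b \<noteq> r \<longrightarrow> K ! b = J ! b" by (auto simp: Xop_def split: if_splits)
        ultimately have "K = K0" using lK lK0 K0n by (intro nth_equalityI) auto
        then show False using K by simp
      qed
      then show ?thesis by (auto simp: T_def)
    qed
    have sumT: "(\<Sum>K\<in>idx m n k. T K) = T K0"
      by (rule sum_collapse[OF finite_idx K0in Tz])
    define eps where "eps q = eP m (I ! q) (J ! q)" for q
    have eps0: "eps q = 0" if "r < q" "q < k" for q using True that by (simp add: eps_def)
    have agreeK0: "\<forall>p. r \<le> p \<and> p < k \<longrightarrow> I ! p = K0 ! p"
      using True K0n by auto
    have PK0: "P I K0 = sscale ((-1) ^ EXs m I K0) (gl m (zip (take r I) (take r J)))"
    proof -
      have "take r K0 = take r J" by (simp add: K0_def)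
      then show ?thesis using IH[OF Suc.prems(2) K0in] agreeK0 unfolding P_def by simp
    qed
    have XK0: "Xop k r K0 J = gen (I ! r) (J ! r)"
      using K0n rk by (auto simp: Xop_def)
    have tp1: "tpar m I K0 = (\<Sum>q<r. eps q)"
    proof -
      have "tpar m I K0 = (\<Sum>q<k. if q = r then 0 else eps q)"
        unfolding tpar_def lI by (intro sum.cong refl) (auto simp: K0n eps_def)
      also have "\<dots> = (\<Sum>q<r. if q = r then 0 else eps q) + (if r = r then 0 else eps r)"
        by (rule sum_upto_Suc[OF rk]) (auto simp: eps0)
      also have "\<dots> = (\<Sum>q<r. eps q)" by simp
      finally show ?thesis .
    qed
    have tp2: "tpar m K0 J = eps r"
    proof -
      have "tpar m K0 J = (\<Sum>q<k. if q = r then eps r else 0)"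
        unfolding tpar_def lK0 by (intro sum.cong refl) (auto simp: K0n eps_def)
      also have "\<dots> = eps r" using rk by simp
      finally show ?thesis .
    qed
    have cr: "cross m I K0 J = 0"
      unfolding cross_def lI
    proof (rule sum.neutral, rule ballI)
      fix p assume p: "p \<in> {..<k}"
      show "(\<Sum>q<p. eP m (I ! p) (K0 ! p) * eP m (K0 ! q) (J ! q)) = 0"
      proof (rule sum.neutral, rule ballI)
        fix q assume q: "q \<in> {..<p}"
        show "eP m (I ! p) (K0 ! p) * eP m (K0 ! q) (J ! q) = 0"
        proof (cases "q = r")
          case True
          then have "r < p" using q by simp
          then show ?thesis using p eps0[of p] by (simp add: K0n eps_def)
        next
          case False
          then show ?thesis using p q by (simp add: K0n)
        qed
      qed
    qed
    have ex1: "EXs m I K0 = (\<Sum>p<r. (\<Sum>q<p. eps q) * eps p)"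
    proof -
      have "EXs m I K0 = (\<Sum>p<k. (\<Sum>q<p. eps q) * (if p = r then 0 else eps p))"
        unfolding EXs_def lI
      proof (intro sum.cong refl)
        fix p assume p: "p \<in> {..<k}"
        have "(\<Sum>q<p. eP m (I ! q) (K0 ! q)) = (\<Sum>q<p. eps q)" if "p \<le> r"
          using that p by (intro sum.cong refl) (auto simp: K0n eps_def)
        then show "(\<Sum>q<p. eP m (I ! q) (K0 ! q)) * eP m (I ! p) (K0 ! p) = (\<Sum>q<p. eps q) * (if p = r then 0 else eps p)"
          using p eps0[of p] by (cases "p \<le> r") (auto simp: K0n eps_def)
      qed
      also have "\<dots> = (\<Sum>p<r. (\<Sum>q<p. eps q) * (if p = r then 0 else eps p)) + (\<Sum>q<r. eps q) * (if r = r then 0 else eps r)"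
        by (rule sum_upto_Suc[OF rk]) (auto simp: eps0)
      finally show ?thesis by simp
    qed
    have ex2: "EXs m I J = (\<Sum>p<r. (\<Sum>q<p. eps q) * eps p) + (\<Sum>q<r. eps q) * eps r"
      unfolding EXs_def lI eps_def[symmetric]
      by (rule sum_upto_Suc[OF rk]) (auto simp: eps0)
    have sgn: "tpar m I K0 * tpar m K0 J + cross m I K0 J + EXs m I K0 = EXs m I J"
      unfolding tp1 tp2 cr ex1 ex2 by simp
    have "T K0 = sscale ((-1) ^ EXs m I J) (gl m (zip (take (Suc r) I) (take (Suc r) J)))"
    proof -
      have z: "zip (take (Suc r) I) (take (Suc r) J) = zip (take r I) (take r J) @ [(I ! r, J ! r)]"
        using rk lI lJ by (simp add: take_Suc_conv_app_nth)
      show ?thesis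
        unfolding T_def PK0 XK0 z gl_snoc sgn[symmetric]
        by (simp add: sprod_sscale_left power_add)
    qed
    then show ?thesis using True step tm sumT by simp
  qed
qed

lemma Xprod_formula:
  assumes "I \<in> idx m n k" "J \<in> idx m n k"
  shows "Xprod m n k I J = sscale ((-1) ^ EXs m I J) (gl m (zip I J))"
proof -
  have lI: "length I = k" and lJ: "length J = k" using assms by (auto simp: idx_def)
  show ?thesis
    unfolding Xprod_def using Pr_formula[OF le_refl assms] lI lJ by simp
qed


lemma perm_mat_iff:
  assumes s: "\<sigma> permutes {..<k}" and lI: "length I = k" and lK: "length K = k"
  shows "(I = map (\<lambda>p. K ! inv \<sigma> p) [0..<k]) \<longleftrightarrow> K = permute_list \<sigma> I"
proof
  assume a: "I = map (\<lambda>p. K ! inv \<sigma> p) [0..<k]"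
  show "K = permute_list \<sigma> I"
  proof (rule nth_equalityI)
    show "length K = length (permute_list \<sigma> I)" using lI lK by simp
    fix q assume q: "q < length K"
    have sq: "\<sigma> q < k" using s q lK by (metis lessThan_iff permutes_in_image)
    have "permute_list \<sigma> I ! q = I ! \<sigma> q" using q lK lI by (simp add: pl_nth)
    also have "\<dots> = K ! inv \<sigma> (\<sigma> q)" using a sq by simp
    also have "\<dots> = K ! q" using s by (simp add: permutes_inverses(2))
    finally show "K ! q = permute_list \<sigma> I ! q" by simp
  qed
next
  assume a: "K = permute_list \<sigma> I"
  show "I = map (\<lambda>p. K ! inv \<sigma> p) [0..<k]"
  proof (rule nth_equalityI)
    show "length I = length (map (\<lambda>p. K ! inv \<sigma> p) [0..<k])" using lI by simp
    fix p assume p: "p < length I"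
    have ip: "inv \<sigma> p < k" using s p lI by (metis lessThan_iff permutes_in_image permutes_inv)
    have "map (\<lambda>p. K ! inv \<sigma> p) [0..<k] ! p = K ! inv \<sigma> p" using p lI by simp
    also have "\<dots> = I ! \<sigma> (inv \<sigma> p)" using a ip lI by (simp add: pl_nth)
    also have "\<dots> = I ! p" using s by (simp add: permutes_inverses(1))
    finally show "I ! p = map (\<lambda>p. K ! inv \<sigma> p) [0..<k] ! p" by simp
  qed
qed

lemma gam_even: "even (gam m I I)"
proof -
  have a: "even (\<Sum>a<length I. par m (I ! a) * (par m (I ! a) + 1))"
    by (intro dvd_sum) simp
  have b: "even (\<Sum>b<length I. \<Sum>a<b. par m (I ! b) * (par m (I ! a) + par m (I ! a)))"
    by (intro dvd_sum) simp
  show ?thesis unfolding gam_def using a b by simp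
qed

lemma tpar_even:
  assumes s: "\<sigma> permutes {..<length I}"
  shows "even (tpar m I (permute_list \<sigma> I))"
proof -
  define K where "K = permute_list \<sigma> I"
  have lK: "length K = length I" by (simp add: K_def)
  have sK: "(\<Sum>p<length I. par m (K ! p)) = (\<Sum>p<length I. par m (I ! p))"
  proof -
    have "(\<Sum>p<length I. par m (K ! p)) = (\<Sum>p<length I. par m (I ! \<sigma> p))"
      by (intro sum.cong refl) (simp add: K_def pl_nth)
    also have "\<dots> = (\<Sum>p<length I. par m (I ! p))"
      by (rule sum.reindex_bij_betw[OF permutes_imp_bij[OF s], where g = "\<lambda>p. par m (I ! p)"])
    finally show ?thesis .
  qed
  have "even (\<Sum>p<length I. eP m (I ! p) (K ! p) + (par m (I ! p) + par m (K ! p)))"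
    by (intro dvd_sum) (simp add: eP_def)
  then have "even (tpar m I K + ((\<Sum>p<length I. par m (I ! p)) + (\<Sum>p<length I. par m (K ! p))))"
    by (simp add: tpar_def sum.distrib)
  then have "even (tpar m I K + 2 * (\<Sum>p<length I. par m (I ! p)))" unfolding sK by (simp add: mult_2)
  then show ?thesis unfolding K_def[symmetric] by simp
qed

lemma cross_EXs:
  assumes "length K = length I"
  shows "cross m I K I = EXs m K I"
  unfolding cross_def EXs_def assms sum_distrib_right
  by (intro sum.cong refl) (simp add: eP_sym mult.commute)

lemma tpar_sym: "length K = length I \<Longrightarrow> tpar m K I = tpar m I K"
  unfolding tpar_def by (simp add: eP_sym)

lemma Imm_sign:
  assumes s: "\<sigma> permutes {..<length I}"
  shows "(-1::complex) ^ ((\<Sum>p<length I. par m (I ! p)) + gam m I I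
      + (tpar m I (permute_list \<sigma> I) * tpar m (permute_list \<sigma> I) I + cross m I (permute_list \<sigma> I) I)
      + sE m I (permute_list \<sigma> I) + Ibar m \<sigma> (permute_list \<sigma> I) + EXs m (permute_list \<sigma> I) I)
    = (-1) ^ eM m I \<sigma>"
proof (rule neg1_pow_eq)
  define K where "K = permute_list \<sigma> I"
  have lK: "length K = length I" by (simp add: K_def)
  have t: "even (tpar m I K * tpar m K I)" using tpar_even[OF s] by (simp add: K_def)
  have c: "cross m I K I = EXs m K I" by (rule cross_EXs[OF lK])
  show "even ((\<Sum>p<length I. par m (I ! p)) + gam m I I
      + (tpar m I (permute_list \<sigma> I) * tpar m (permute_list \<sigma> I) I + cross m I (permute_list \<sigma> I) I)
      + sE m I (permute_list \<sigma> I) + Ibar m \<sigma> (permute_list \<sigma> I) + EXs m (permute_list \<sigma> I) I + eM m I \<sigma>)"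
  proof -
    have eq: "(\<Sum>p<length I. par m (I ! p)) + gam m I I
      + (tpar m I K * tpar m K I + cross m I K I)
      + sE m I K + Ibar m \<sigma> K + EXs m K I + eM m I \<sigma>
      = gam m I I + tpar m I K * tpar m K I + 2 * ((\<Sum>p<length I. par m (I ! p)) + EXs m K I + sE m I K + Ibar m \<sigma> K)"
      unfolding eM_def K_def[symmetric] c by simp
    show ?thesis unfolding K_def[symmetric] eq using gam_even[of m I] t by simp
  qed
qed

lemma Imm_expand:
  assumes I: "set I \<subseteq> {1..m+n}"
  shows "Imm m n \<chi> I = (\<Sum>\<sigma>\<in>{\<sigma>. \<sigma> permutes {..<length I}}. sscale (\<chi> \<sigma>) (Mt m I \<sigma>))"
proof -
  define k where "k = length I"
  define P where "P = {\<sigma>. \<sigma> permutes {..<k}}"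
  have finP: "finite P" unfolding P_def by (rule finite_permutations) simp
  have Iidx: "I \<in> idx m n k" using I by (simp add: idx_def k_def)
  define s1 where "s1 K = (-1::complex) ^ (tpar m I K * tpar m K I + cross m I K I)" for K
  have "tmul m n k (chi_tens m n k \<chi>) (Xprod m n k) I I =
      (\<Sum>K\<in>idx m n k. sscale (s1 K) (sprod m (chi_tens m n k \<chi> I K) (Xprod m n k K I)))"
    by (simp add: tmul_def s1_def)
  also have "\<dots> = (\<Sum>K\<in>idx m n k. \<Sum>\<sigma>\<in>P.
       sscale (s1 K * (\<chi> \<sigma> * (-1) ^ sE m I K * perm_mat m \<sigma> I K)) (Xprod m n k K I))"
    by (simp add: chi_tens_def sprod_sum_left sprod_sscale_left sscale_sum P_def)
  also have "\<dots> = (\<Sum>\<sigma>\<in>P. \<Sum>K\<in>idx m n k.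
       sscale (s1 K * (\<chi> \<sigma> * (-1) ^ sE m I K * perm_mat m \<sigma> I K)) (Xprod m n k K I))"
    by (rule sum.swap)
  also have "\<dots> = (\<Sum>\<sigma>\<in>P. sscale ((-1) ^ ((\<Sum>p<length I. par m (I ! p)) + gam m I I)) (sscale (\<chi> \<sigma>) (Mt m I \<sigma>)))"
  proof (rule sum.cong[OF refl])
    fix \<sigma> assume sP: "\<sigma> \<in> P"
    then have s: "\<sigma> permutes {..<k}" by (simp add: P_def)
    define K0 where "K0 = permute_list \<sigma> I"
    have K0in: "K0 \<in> idx m n k" using Iidx s by (simp add: K0_def idx_def k_def)
    have "(\<Sum>K\<in>idx m n k. sscale (s1 K * (\<chi> \<sigma> * (-1) ^ sE m I K * perm_mat m \<sigma> I K)) (Xprod m n k K I))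
        = sscale (s1 K0 * (\<chi> \<sigma> * (-1) ^ sE m I K0 * perm_mat m \<sigma> I K0)) (Xprod m n k K0 I)"
    proof (rule sum_collapse[OF finite_idx K0in])
      fix K assume K: "K \<in> idx m n k" "K \<noteq> K0"
      have "perm_mat m \<sigma> I K = 0"
        using K perm_mat_iff[OF s, of I K] unfolding perm_mat_def
        by (auto simp: idx_def k_def K0_def)
      then show "sscale (s1 K * (\<chi> \<sigma> * (-1) ^ sE m I K * perm_mat m \<sigma> I K)) (Xprod m n k K I) = 0" by simp
    qed
    also have "perm_mat m \<sigma> I K0 = (-1) ^ Ibar m \<sigma> K0"
      using perm_mat_iff[OF s, of I K0] unfolding perm_mat_def by (simp add: K0_def k_def)
    also have "Xprod m n k K0 I = sscale ((-1) ^ EXs m K0 I) (gl m (zip K0 I))"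
      by (rule Xprod_formula[OF K0in Iidx])
    also have "sscale (s1 K0 * (\<chi> \<sigma> * (-1) ^ sE m I K0 * (-1) ^ Ibar m \<sigma> K0)) (sscale ((-1) ^ EXs m K0 I) (gl m (zip K0 I)))
       = sscale ((-1) ^ ((\<Sum>p<length I. par m (I ! p)) + gam m I I)) (sscale (\<chi> \<sigma>) (Mt m I \<sigma>))"
    proof -
      have "(s1 K0 * (\<chi> \<sigma> * (-1) ^ sE m I K0 * (-1) ^ Ibar m \<sigma> K0)) * (-1) ^ EXs m K0 I
          = (-1) ^ ((\<Sum>p<length I. par m (I ! p)) + gam m I I) * (\<chi> \<sigma> * (-1) ^ eM m I \<sigma>)"
      proof -
        have e: "(-1::complex) ^ ((\<Sum>p<length I. par m (I ! p)) + gam m I I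
          + (tpar m I K0 * tpar m K0 I + cross m I K0 I) + sE m I K0 + Ibar m \<sigma> K0 + EXs m K0 I) = (-1) ^ eM m I \<sigma>"
          using Imm_sign[of \<sigma> I m] s by (simp add: K0_def k_def)
        have sq: "(-1::complex) ^ ((\<Sum>p<length I. par m (I ! p)) + gam m I I) * (-1) ^ ((\<Sum>p<length I. par m (I ! p)) + gam m I I) = 1"
          by (simp add: power_add[symmetric] mult_2[symmetric] power_mult)
        have "(s1 K0 * (\<chi> \<sigma> * (-1) ^ sE m I K0 * (-1) ^ Ibar m \<sigma> K0)) * (-1) ^ EXs m K0 I
            = \<chi> \<sigma> * (-1) ^ (tpar m I K0 * tpar m K0 I + cross m I K0 I + sE m I K0 + Ibar m \<sigma> K0 + EXs m K0 I)"
          by (simp add: s1_def power_add)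
        also have "\<dots> = \<chi> \<sigma> * ((-1) ^ ((\<Sum>p<length I. par m (I ! p)) + gam m I I) * (-1) ^ ((\<Sum>p<length I. par m (I ! p)) + gam m I I))
            * (-1) ^ (tpar m I K0 * tpar m K0 I + cross m I K0 I + sE m I K0 + Ibar m \<sigma> K0 + EXs m K0 I)"
          unfolding sq by simp
        also have "\<dots> = (-1) ^ ((\<Sum>p<length I. par m (I ! p)) + gam m I I) * (\<chi> \<sigma> *
            (-1) ^ ((\<Sum>p<length I. par m (I ! p)) + gam m I I
          + (tpar m I K0 * tpar m K0 I + cross m I K0 I) + sE m I K0 + Ibar m \<sigma> K0 + EXs m K0 I))"
          by (simp add: power_add algebra_simps)
        also have "\<dots> = (-1) ^ ((\<Sum>p<length I. par m (I ! p)) + gam m I I) * (\<chi> \<sigma> * (-1) ^ eM m I \<sigma>)"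
          unfolding e ..
        finally show ?thesis .
      qed
      then show ?thesis by (simp only: Mt_def K0_def[symmetric] sscale_sscale)
    qed
    finally show "(\<Sum>K\<in>idx m n k. sscale (s1 K * (\<chi> \<sigma> * (-1) ^ sE m I K * perm_mat m \<sigma> I K)) (Xprod m n k K I))
       = sscale ((-1) ^ ((\<Sum>p<length I. par m (I ! p)) + gam m I I)) (sscale (\<chi> \<sigma>) (Mt m I \<sigma>))" .
  qed
  finally have tm: "tmul m n k (chi_tens m n k \<chi>) (Xprod m n k) I I =
     sscale ((-1) ^ ((\<Sum>p<length I. par m (I ! p)) + gam m I I)) (\<Sum>\<sigma>\<in>P. sscale (\<chi> \<sigma>) (Mt m I \<sigma>))"
    by (simp add: sscale_sum)
  have sq: "(-1::complex) ^ (\<Sum>p<length I. par m (I ! p)) * ((-1) ^ gam m I I * ((-1) ^ (\<Sum>p<length I. par m (I ! p)) * (-1) ^ gam m I I)) = 1"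
  proof -
    have "(-1::complex) ^ (\<Sum>p<length I. par m (I ! p)) * ((-1) ^ gam m I I * ((-1) ^ (\<Sum>p<length I. par m (I ! p)) * (-1) ^ gam m I I))
        = (-1) ^ (2 * ((\<Sum>p<length I. par m (I ! p)) + gam m I I))"
      by (simp add: power_add mult_2 algebra_simps)
    also have "\<dots> = 1" by (simp add: power_mult)
    finally show ?thesis .
  qed
  show ?thesis
    unfolding Imm_def Let_def matel_def k_def[symmetric] tm
    by (simp add: sq P_def k_def power_add)
qed


definition dsum :: "nat \<Rightarrow> (nat \<Rightarrow> nat) \<Rightarrow> (nat \<Rightarrow> nat) \<Rightarrow> nat \<Rightarrow> nat" where
  "dsum a h1 h2 p = (if p < a then h1 p else a + h2 (p - a))"

lemma sum_split:
  fixes a b :: nat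
  shows "(\<Sum>p<a+b. f p) = (\<Sum>p<a. f p) + (\<Sum>q<b. f (a + q))"
  by (induction b) (simp_all add: add.assoc)

lemma perm_lt: "h permutes {..<a} \<Longrightarrow> p < a \<Longrightarrow> h p < a"
  by (metis lessThan_iff permutes_in_image)

lemma perm_ge: "h permutes {..<a} \<Longrightarrow> \<not> p < a \<Longrightarrow> h p = p"
  by (simp add: permutes_def)

lemma dsum_lt:
  assumes h1: "h1 permutes {..<a}" and h2: "h2 permutes {..<b}" and p: "p < a + b"
  shows "dsum a h1 h2 p < a + b"
proof (cases "p < a")
  case True
  then show ?thesis using perm_lt[OF h1 True] by (simp add: dsum_def)
next
  case False
  then have "p - a < b" using p by simp
  then show ?thesis using perm_lt[OF h2, of "p - a"] False by (simp add: dsum_def)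
qed

lemma dsum_permutes:
  assumes h1: "h1 permutes {..<a}" and h2: "h2 permutes {..<b}"
  shows "dsum a h1 h2 permutes {..<a+b}"
proof (rule bij_imp_permutes)
  have i1: "inv h1 permutes {..<a}" and i2: "inv h2 permutes {..<b}" using h1 h2 by (simp_all add: permutes_inv)
  show "bij_betw (dsum a h1 h2) {..<a + b} {..<a + b}"
  proof (rule bij_betw_byWitness[where f' = "dsum a (inv h1) (inv h2)"])
    show "\<forall>x\<in>{..<a + b}. dsum a (inv h1) (inv h2) (dsum a h1 h2 x) = x"
      using h1 h2 perm_lt[OF h1] perm_lt[OF h2]
      by (auto simp: dsum_def permutes_inverses(2))
    show "\<forall>y\<in>{..<a + b}. dsum a h1 h2 (dsum a (inv h1) (inv h2) y) = y"
      using h1 h2 perm_lt[OF i1] perm_lt[OF i2]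
      by (auto simp: dsum_def permutes_inverses(1))
    show "dsum a h1 h2 ` {..<a + b} \<subseteq> {..<a + b}"
      using dsum_lt[OF h1 h2] by auto
    show "dsum a (inv h1) (inv h2) ` {..<a + b} \<subseteq> {..<a + b}"
      using dsum_lt[OF i1 i2] by auto
  qed
  show "dsum a h1 h2 x = x" if "x \<notin> {..<a + b}" for x
    using that perm_ge[OF h2, of "x - a"] by (auto simp: dsum_def)
qed

lemma permute_list_dsum:
  assumes "length J1 = a" "length J2 = b" and h1: "h1 permutes {..<a}" and h2: "h2 permutes {..<b}"
  shows "permute_list (dsum a h1 h2) (J1 @ J2) = permute_list h1 J1 @ permute_list h2 J2"
  by (rule nth_equalityI)
     (use assms perm_lt[OF h1] perm_lt[OF h2] in \<open>auto simp: pl_nth nth_append dsum_def\<close>)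

lemma eM_split:
  assumes lJ1: "length J1 = a" and lJ2: "length J2 = b" and h1: "h1 permutes {..<a}" and h2: "h2 permutes {..<b}"
  shows "even (eM m (J1 @ J2) (dsum a h1 h2) + eM m J1 h1 + eM m J2 h2)"
proof -
  define K1 where "K1 = permute_list h1 J1"
  define K2 where "K2 = permute_list h2 J2"
  have lK1: "length K1 = a" and lK2: "length K2 = b" by (simp_all add: K1_def K2_def lJ1 lJ2)
  have K: "permute_list (dsum a h1 h2) (J1 @ J2) = K1 @ K2"
    unfolding K1_def K2_def by (rule permute_list_dsum[OF lJ1 lJ2 h1 h2])
  define h where "h = dsum a h1 h2"
  have hl: "h p = h1 p" if "p < a" for p using that by (simp add: h_def dsum_def)
  have hr: "h (a + q) = a + h2 q" for q by (simp add: h_def dsum_def)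
  have s1: "(\<Sum>p<length (J1 @ J2). par m ((J1 @ J2) ! p)) = (\<Sum>p<length J1. par m (J1 ! p)) + (\<Sum>p<length J2. par m (J2 ! p))"
    by (simp add: lJ1 lJ2 sum_split nth_append)
  have s2: "Ibar m h (K1 @ K2) = Ibar m h1 K1 + Ibar m h2 K2"
  proof -
    define G where "G p q = (if p < q \<and> h q < h p then par m ((K1 @ K2) ! p) * par m ((K1 @ K2) ! q) else 0)" for p q
    have "Ibar m h (K1 @ K2) = (\<Sum>p<a+b. \<Sum>q<a+b. G p q)"
      by (simp add: Ibar_def G_def lK1 lK2)
    also have "\<dots> = (\<Sum>p<a. \<Sum>q<a. G p q) + (\<Sum>p<a. \<Sum>q<b. G p (a + q)) + ((\<Sum>p<b. \<Sum>q<a. G (a + p) q) + (\<Sum>p<b. \<Sum>q<b. G (a + p) (a + q)))"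
      by (simp add: sum_split sum.distrib)
    also have "(\<Sum>p<a. \<Sum>q<b. G p (a + q)) = 0"
    proof (intro sum.neutral ballI)
      fix p q assume "p \<in> {..<a}" "q \<in> {..<b}"
      then have "h1 p < a" "p < a" using perm_lt[OF h1] by auto
      then show "G p (a + q) = 0" by (simp add: G_def hl hr)
    qed
    also have "(\<Sum>p<b. \<Sum>q<a. G (a + p) q) = 0"
      by (intro sum.neutral ballI) (auto simp: G_def)
    also have "(\<Sum>p<a. \<Sum>q<a. G p q) = Ibar m h1 K1"
      unfolding Ibar_def lK1 by (intro sum.cong refl) (auto simp: G_def hl nth_append lK1)
    also have "(\<Sum>p<b. \<Sum>q<b. G (a + p) (a + q)) = Ibar m h2 K2"
      unfolding Ibar_def lK2 by (intro sum.cong refl) (auto simp: G_def hr nth_append lK1)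
    finally show ?thesis by simp
  qed
  have s3: "sE m (J1 @ J2) (K1 @ K2) = sE m J1 K1 + sE m J2 K2 + tpar m J2 K2 * (\<Sum>p<a. par m (K1 ! p))"
  proof -
    have "sE m (J1 @ J2) (K1 @ K2) = (\<Sum>q<a+b. \<Sum>p<q. eP m ((J1 @ J2) ! q) ((K1 @ K2) ! q) * par m ((K1 @ K2) ! p))"
      by (simp add: sE_def lJ1 lJ2)
    also have "\<dots> = (\<Sum>q<a. \<Sum>p<q. eP m ((J1 @ J2) ! q) ((K1 @ K2) ! q) * par m ((K1 @ K2) ! p))
       + (\<Sum>q<b. \<Sum>p<a+q. eP m ((J1 @ J2) ! (a + q)) ((K1 @ K2) ! (a + q)) * par m ((K1 @ K2) ! p))"
      by (rule sum_split)
    also have "(\<Sum>q<a. \<Sum>p<q. eP m ((J1 @ J2) ! q) ((K1 @ K2) ! q) * par m ((K1 @ K2) ! p)) = sE m J1 K1"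
      unfolding sE_def lJ1 by (intro sum.cong refl) (auto simp: nth_append lJ1 lK1)
    also have "(\<Sum>q<b. \<Sum>p<a+q. eP m ((J1 @ J2) ! (a + q)) ((K1 @ K2) ! (a + q)) * par m ((K1 @ K2) ! p))
       = (\<Sum>q<b. eP m (J2 ! q) (K2 ! q) * (\<Sum>p<a. par m (K1 ! p)) + (\<Sum>p<q. eP m (J2 ! q) (K2 ! q) * par m (K2 ! p)))"
      by (intro sum.cong refl) (simp add: sum_split nth_append lJ1 lK1 sum_distrib_left)
    also have "\<dots> = tpar m J2 K2 * (\<Sum>p<a. par m (K1 ! p)) + sE m J2 K2"
      by (simp add: sum.distrib tpar_def sE_def lJ2 sum_distrib_right)
    finally show ?thesis by simp
  qed
  have te: "even (tpar m J2 K2)" using tpar_even[of h2 J2 m] h2 by (simp add: K2_def lJ2)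
  have "eM m (J1 @ J2) h = eM m J1 h1 + eM m J2 h2 + tpar m J2 K2 * (\<Sum>p<a. par m (K1 ! p))"
    unfolding eM_def h_def[symmetric] K[folded h_def] s1 s2 s3 K1_def[symmetric] K2_def[symmetric] by simp
  then have eq: "eM m (J1 @ J2) h + eM m J1 h1 + eM m J2 h2 = 2 * (eM m J1 h1 + eM m J2 h2) + tpar m J2 K2 * (\<Sum>p<a. par m (K1 ! p))"
    by simp
  have "even (2 * (eM m J1 h1 + eM m J2 h2) + tpar m J2 K2 * (\<Sum>p<a. par m (K1 ! p)))" using te by simp
  then show ?thesis unfolding h_def[symmetric] eq .
qed

lemma Mt_split:
  assumes lJ1: "length J1 = a" and lJ2: "length J2 = b" and h1: "h1 permutes {..<a}" and h2: "h2 permutes {..<b}"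
  shows "Mt m (J1 @ J2) (dsum a h1 h2) = sprod m (Mt m J1 h1) (Mt m J2 h2)"
proof -
  have z: "zip (permute_list (dsum a h1 h2) (J1 @ J2)) (J1 @ J2) = zip (permute_list h1 J1) J1 @ zip (permute_list h2 J2) J2"
    unfolding permute_list_dsum[OF lJ1 lJ2 h1 h2] by (simp add: lJ1 lJ2)
  have s: "(-1::complex) ^ eM m (J1 @ J2) (dsum a h1 h2) = (-1) ^ eM m J1 h1 * (-1) ^ eM m J2 h2"
    unfolding power_add[symmetric] by (rule neg1_pow_eq) (use eM_split[OF assms, of m] in \<open>simp add: add.assoc\<close>)
  show ?thesis
    unfolding Mt_def z gl_append s by (simp add: sprod_sscale_left sprod_sscale_right ac_simps)
qed


lemma blk_Cons: "blk (a # mu) p = (if p < a then 0 else Suc (blk mu (p - a)))"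
proof -
  have e: "{j. j < length (a # mu) \<and> sum_list (take (Suc j) (a # mu)) \<le> p} =
     (if a \<le> p then insert 0 (Suc ` {j. j < length mu \<and> sum_list (take (Suc j) mu) \<le> p - a}) else {})"
  proof (cases "a \<le> p")
    case True
    show ?thesis
    proof (rule set_eqI)
      fix j
      show "j \<in> {j. j < length (a # mu) \<and> sum_list (take (Suc j) (a # mu)) \<le> p} \<longleftrightarrow>
        j \<in> (if a \<le> p then insert 0 (Suc ` {j. j < length mu \<and> sum_list (take (Suc j) mu) \<le> p - a}) else {})"
        using True by (cases j) auto
    qed
  next
    case False
    show ?thesis
    proof (rule set_eqI)
      fix j
      show "j \<in> {j. j < length (a # mu) \<and> sum_list (take (Suc j) (a # mu)) \<le> p} \<longleftrightarrow>
        j \<in> (if a \<le> p then insert 0 (Suc ` {j. j < length mu \<and> sum_list (take (Suc j) mu) \<le> p - a}) else {})"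
        using False by (cases j) auto
    qed
  qed
  have fin: "finite {j. j < length mu \<and> sum_list (take (Suc j) mu) \<le> p - a}" by simp
  show ?thesis
    unfolding blk_def e using fin by (auto simp: card_image)
qed

lemma young_Nil: "young [] = {id}"
  by (auto simp: young_def)

lemma young_perm: "h \<in> young mu \<Longrightarrow> h permutes {..<sum_list mu}"
  by (simp add: young_def)

lemma dsum_in_young:
  assumes h1: "h1 permutes {..<a}" and h2: "h2 \<in> young mu"
  shows "dsum a h1 h2 \<in> young (a # mu)"
proof -
  have h2p: "h2 permutes {..<sum_list mu}" using h2 by (simp add: young_def)
  have "dsum a h1 h2 permutes {..<sum_list (a # mu)}" using dsum_permutes[OF h1 h2p] by simp
  moreover have "blk (a # mu) (dsum a h1 h2 p) = blk (a # mu) p" if "p < sum_list (a # mu)" for p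
  proof (cases "p < a")
    case True
    then show ?thesis using perm_lt[OF h1 True] by (simp add: dsum_def blk_Cons)
  next
    case False
    then have "p - a < sum_list mu" using that by simp
    then have "blk mu (h2 (p - a)) = blk mu (p - a)" using h2 by (simp add: young_def)
    then show ?thesis using False by (simp add: dsum_def blk_Cons)
  qed
  ultimately show ?thesis by (simp add: young_def)
qed

lemma young_Cons: "young (a # mu) = (\<lambda>(h1, h2). dsum a h1 h2) ` ({h1. h1 permutes {..<a}} \<times> young mu)"
proof (rule set_eqI, rule iffI)
  fix \<sigma> assume s: "\<sigma> \<in> young (a # mu)"
  define b where "b = sum_list mu"
  have sp: "\<sigma> permutes {..<a + b}" using s by (simp add: young_def b_def)
  have sb: "blk (a # mu) (\<sigma> p) = blk (a # mu) p" if "p < a + b" for p using s that by (simp add: young_def b_def)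
  have slt: "\<sigma> p < a" if "p < a" for p using sb[of p] that by (auto simp: blk_Cons split: if_splits)
  have sge: "\<not> \<sigma> p < a" if "a \<le> p" "p < a + b" for p using sb[of p] that by (auto simp: blk_Cons split: if_splits)
  have sin: "\<sigma> p < a + b" if "p < a + b" for p using perm_lt[OF sp that] .
  have sinj: "\<sigma> p = \<sigma> q \<Longrightarrow> p = q" for p q using sp by (metis permutes_inj injD)
  define h1 where "h1 p = (if p < a then \<sigma> p else p)" for p
  define h2 where "h2 q = (if q < b then \<sigma> (a + q) - a else q)" for q
  have h1p: "h1 permutes {..<a}"
  proof (rule bij_imp_permutes)
    have inj: "inj_on h1 {..<a}" by (auto simp: inj_on_def h1_def dest: sinj)
    have "h1 ` {..<a} \<subseteq> {..<a}" by (auto simp: h1_def slt)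
    then have "h1 ` {..<a} = {..<a}" using inj by (intro endo_inj_surj) auto
    then show "bij_betw h1 {..<a} {..<a}" using inj by (simp add: bij_betw_def)
    show "h1 x = x" if "x \<notin> {..<a}" for x using that by (simp add: h1_def)
  qed
  have h2p: "h2 permutes {..<b}"
  proof (rule bij_imp_permutes)
    have inj: "inj_on h2 {..<b}"
    proof (rule inj_onI)
      fix p q assume pq: "p \<in> {..<b}" "q \<in> {..<b}" "h2 p = h2 q"
      have "\<not> \<sigma> (a + p) < a" "\<not> \<sigma> (a + q) < a" using sge pq by auto
      then have "\<sigma> (a + p) = \<sigma> (a + q)" using pq by (simp add: h2_def)
      then show "p = q" using sinj by fastforce
    qed
    have "h2 ` {..<b} \<subseteq> {..<b}"
    proof
      fix y assume "y \<in> h2 ` {..<b}"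
      then obtain q where q: "q < b" "y = h2 q" by auto
      have "\<sigma> (a + q) < a + b" using sin q by simp
      then show "y \<in> {..<b}" using q sge[of "a + q"] by (simp add: h2_def)
    qed
    then have "h2 ` {..<b} = {..<b}" using inj by (intro endo_inj_surj) auto
    then show "bij_betw h2 {..<b} {..<b}" using inj by (simp add: bij_betw_def)
    show "h2 x = x" if "x \<notin> {..<b}" for x using that by (simp add: h2_def)
  qed
  have h2y: "h2 \<in> young mu"
  proof -
    have "blk mu (h2 q) = blk mu q" if "q < b" for q
    proof -
      have "blk (a # mu) (\<sigma> (a + q)) = blk (a # mu) (a + q)" using sb that by simp
      moreover have "\<not> \<sigma> (a + q) < a" using sge that by simp
      ultimately show ?thesis using that by (simp add: blk_Cons h2_def)
    qed
    then show ?thesis using h2p by (simp add: young_def b_def)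
  qed
  have "\<sigma> = dsum a h1 h2"
  proof
    fix p
    show "\<sigma> p = dsum a h1 h2 p"
    proof (cases "p < a")
      case True
      then show ?thesis by (simp add: dsum_def h1_def)
    next
      case False
      show ?thesis
      proof (cases "p < a + b")
        case True
        have pb: "p - a < b" using True False by simp
        have "a + (p - a) = p" using False by simp
        then show ?thesis using False True sge[of p] pb by (simp add: dsum_def h2_def)
      next
        case False
        then have "\<sigma> p = p" using sp by (simp add: permutes_def)
        then show ?thesis using False \<open>\<not> p < a\<close> by (simp add: dsum_def h2_def)
      qed
    qed
  qed
  then show "\<sigma> \<in> (\<lambda>(h1, h2). dsum a h1 h2) ` ({h1. h1 permutes {..<a}} \<times> young mu)"
    using h1p h2y by auto
next
  fix \<sigma> assume "\<sigma> \<in> (\<lambda>(h1, h2). dsum a h1 h2) ` ({h1. h1 permutes {..<a}} \<times> young mu)"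
  then show "\<sigma> \<in> young (a # mu)" using dsum_in_young by auto
qed

lemma dsum_inj: "inj_on (\<lambda>(h1, h2). dsum a h1 h2) ({h1. h1 permutes {..<a}} \<times> young mu)"
proof (rule inj_onI, clarsimp)
  fix h1 h2 h1' h2'
  assume h: "h1 permutes {..<a}" "h2 \<in> young mu" "h1' permutes {..<a}" "h2' \<in> young mu"
    and e: "dsum a h1 h2 = dsum a h1' h2'"
  have "h1 p = h1' p" for p
  proof (cases "p < a")
    case True
    then show ?thesis using fun_cong[OF e, of p] by (simp add: dsum_def)
  next
    case False
    then show ?thesis using perm_ge[OF h(1) False] perm_ge[OF h(3) False] by simp
  qed
  moreover have "h2 q = h2' q" for q using fun_cong[OF e, of "a + q"] by (simp add: dsum_def)
  ultimately show "h1 = h1' \<and> h2 = h2'" by auto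
qed

lemma dsum_id_left: "h1 permutes {..<a} \<Longrightarrow> dsum a h1 h2 = h1 \<circ> dsum a id h2"
  by (auto simp: dsum_def perm_ge)

lemma dsum_id_id: "dsum a id id = id"
  by (auto simp: dsum_def)

lemma dsum_id_id': "dsum a (\<lambda>x. x) (\<lambda>x. x) = (\<lambda>x. x)"
  by (auto simp: dsum_def)

lemma sign_dsum_shift:
  assumes h2: "h2 permutes {..<b}"
  shows "sign (dsum a id h2) = sign h2"
  using h2 finite_lessThan[of b]
proof (induction rule: permutes_induct)
  case id
  then show ?case by (simp add: dsum_id_id')
next
  case (swap c d p)
  have e: "dsum a id (Transposition.transpose c d \<circ> p) = Transposition.transpose (a + c) (a + d) \<circ> dsum a id p"
  proof
    fix x
    show "dsum a id (Transposition.transpose c d \<circ> p) x = (Transposition.transpose (a + c) (a + d) \<circ> dsum a id p) x"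
      by (auto simp: dsum_def transpose_def)
  qed
  have pd: "permutation (dsum a id p)"
    using dsum_permutes[OF permutes_id[of "{..<a}"] swap(4)] by (auto simp: permutation_permutes id_def)
  have pp: "permutation p" using swap(4) by (auto simp: permutation_permutes)
  have IH: "sign (dsum a id p) = sign p" using swap.IH by (simp add: id_def)
  have s1: "sign (Transposition.transpose (a + c) (a + d) \<circ> dsum a id p) = sign (Transposition.transpose (a + c) (a + d)) * sign (dsum a id p)"
    by (rule sign_compose[OF permutation_swap_id pd])
  have s2: "sign (Transposition.transpose c d \<circ> p) = sign (Transposition.transpose c d) * sign p"
    by (rule sign_compose[OF permutation_swap_id pp])
  show ?case
    unfolding e s1 s2 IH using swap(3) by (simp add: sign_swap_id)
qed

lemma sign_dsum:
  assumes h1: "h1 permutes {..<a}" and h2: "h2 permutes {..<b}"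
  shows "sign (dsum a h1 h2) = sign h1 * sign h2"
proof -
  have p1: "permutation h1" using h1 by (auto simp: permutation_permutes)
  have p2: "permutation (dsum a id h2)"
    using dsum_permutes[OF permutes_id[of "{..<a}"] h2] by (auto simp: permutation_permutes id_def)
  show ?thesis
    unfolding dsum_id_left[OF h1] using p1 p2 by (simp add: sign_compose sign_dsum_shift[OF h2])
qed

fun blocks :: "nat list \<Rightarrow> 'a list \<Rightarrow> 'a list list" where
  "blocks [] J = []"
| "blocks (a # mu) J = take a J # blocks mu (drop a J)"

lemma Mt_Nil: "Mt m [] h = sone"
  by (simp add: Mt_def eM_def Ibar_def sE_def)

lemma block_imm:
  assumes th1: "\<theta> id = 1"
    and thmul: "\<And>a b h1 h2. h1 permutes {..<a} \<Longrightarrow> h2 permutes {..<b} \<Longrightarrow> \<theta> (dsum a h1 h2) = \<theta> h1 * \<theta> h2"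
  shows "set J \<subseteq> {1..m+n} \<Longrightarrow> length J = sum_list lam \<Longrightarrow>
    (\<Sum>h\<in>young lam. sscale (\<theta> h) (Mt m J h)) = sprod_list m (map (Imm m n \<theta>) (blocks lam J))"
proof (induction lam arbitrary: J)
  case Nil
  then show ?case using th1 by (simp add: young_Nil Mt_Nil sprod_list_def id_def)
next
  case (Cons a mu)
  define J1 where "J1 = take a J"
  define J2 where "J2 = drop a J"
  have J: "J = J1 @ J2" by (simp add: J1_def J2_def)
  have l1: "length J1 = a" and l2: "length J2 = sum_list mu" using Cons.prems by (simp_all add: J1_def J2_def)
  have s1: "set J1 \<subseteq> {1..m+n}" and s2: "set J2 \<subseteq> {1..m+n}"
    using Cons.prems set_take_subset[of a J] set_drop_subset[of a J] by (auto simp: J1_def J2_def)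
  define P where "P = {h1. h1 permutes {..<a}}"
  have finP: "finite P" unfolding P_def by (rule finite_permutations) simp
  have finY: "finite (young mu)"
    by (rule finite_subset[of _ "{h. h permutes {..<sum_list mu}}"]) (auto simp: young_def finite_permutations)
  have "(\<Sum>h\<in>young (a # mu). sscale (\<theta> h) (Mt m J h))
      = (\<Sum>(h1, h2)\<in>P \<times> young mu. sscale (\<theta> (dsum a h1 h2)) (Mt m J (dsum a h1 h2)))"
    unfolding young_Cons P_def[symmetric]
    by (subst sum.reindex[OF dsum_inj[of a mu, folded P_def]]) (simp add: comp_def case_prod_unfold)
  also have "\<dots> = (\<Sum>h1\<in>P. \<Sum>h2\<in>young mu. sscale (\<theta> (dsum a h1 h2)) (Mt m J (dsum a h1 h2)))"
    by (rule sum.cartesian_product[symmetric])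
  also have "\<dots> = (\<Sum>h1\<in>P. \<Sum>h2\<in>young mu. sprod m (sscale (\<theta> h1) (Mt m J1 h1)) (sscale (\<theta> h2) (Mt m J2 h2)))"
  proof (intro sum.cong refl)
    fix h1 h2 assume h1: "h1 \<in> P" and h2: "h2 \<in> young mu"
    have h1p: "h1 permutes {..<a}" using h1 by (simp add: P_def)
    have h2p: "h2 permutes {..<sum_list mu}" using h2 by (simp add: young_def)
    show "sscale (\<theta> (dsum a h1 h2)) (Mt m J (dsum a h1 h2)) = sprod m (sscale (\<theta> h1) (Mt m J1 h1)) (sscale (\<theta> h2) (Mt m J2 h2))"
      unfolding J Mt_split[OF l1 l2 h1p h2p] thmul[OF h1p h2p]
      by (simp add: sprod_sscale_left sprod_sscale_right ac_simps)
  qed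
  also have "\<dots> = sprod m (\<Sum>h1\<in>P. sscale (\<theta> h1) (Mt m J1 h1)) (\<Sum>h2\<in>young mu. sscale (\<theta> h2) (Mt m J2 h2))"
    by (simp add: sprod_sum_left sprod_sum_right) (rule sum.swap)
  also have "(\<Sum>h1\<in>P. sscale (\<theta> h1) (Mt m J1 h1)) = Imm m n \<theta> J1"
    unfolding Imm_expand[OF s1] P_def l1 ..
  also have "(\<Sum>h2\<in>young mu. sscale (\<theta> h2) (Mt m J2 h2)) = sprod_list m (map (Imm m n \<theta>) (blocks mu J2))"
    by (rule Cons.IH[OF s2 l2])
  finally show ?case by (simp add: sprod_list_def J1_def J2_def)
qed


definition classfun :: "((nat \<Rightarrow> nat) \<Rightarrow> complex) \<Rightarrow> bool" where
  "classfun \<theta> \<longleftrightarrow> (\<forall>k x \<tau>. x permutes {..<k} \<longrightarrow> \<tau> permutes {..<k} \<longrightarrow> \<theta> (inv x \<circ> \<tau> \<circ> x) = \<theta> \<tau>)"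

lemma conj_bij:
  assumes x: "x permutes {..<k}"
  shows "bij_betw (\<lambda>h. x \<circ> h \<circ> inv x) {h. h permutes {..<k}} {h. h permutes {..<k}}"
proof (rule bij_betw_byWitness[where f' = "\<lambda>\<tau>. inv x \<circ> \<tau> \<circ> x"])
  have xi: "inv x permutes {..<k}" using x by (rule permutes_inv)
  show "\<forall>a\<in>{h. h permutes {..<k}}. inv x \<circ> (x \<circ> a \<circ> inv x) \<circ> x = a"
    using x by (auto simp: fun_eq_iff permutes_inverses)
  show "\<forall>a'\<in>{h. h permutes {..<k}}. x \<circ> (inv x \<circ> a' \<circ> x) \<circ> inv x = a'"
    using x by (auto simp: fun_eq_iff permutes_inverses)
  show "(\<lambda>h. x \<circ> h \<circ> inv x) ` {h. h permutes {..<k}} \<subseteq> {h. h permutes {..<k}}"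
    using x xi by (auto intro!: permutes_compose)
  show "(\<lambda>\<tau>. inv x \<circ> \<tau> \<circ> x) ` {h. h permutes {..<k}} \<subseteq> {h. h permutes {..<k}}"
    using x xi by (auto intro!: permutes_compose)
qed

lemma conj_cancel:
  assumes x: "x permutes {..<k}"
  shows "inv x \<circ> (x \<circ> h \<circ> inv x) \<circ> x = h"
  using x by (auto simp: fun_eq_iff permutes_inverses)

lemma classfun_col: "classfun chi_col"
  unfolding classfun_def chi_col_def
proof (intro allI impI)
  fix k :: nat and x \<tau> assume x: "x permutes {..<k}" and t: "\<tau> permutes {..<k}"
  have px: "permutation x" using x by (auto simp: permutation_permutes intro!: exI[of _ "{..<k}"])
  have pt: "permutation \<tau>" using t by (auto simp: permutation_permutes intro!: exI[of _ "{..<k}"])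
  have pxi: "permutation (inv x)" using permutes_inv[OF x] by (auto simp: permutation_permutes intro!: exI[of _ "{..<k}"])
  have "sign (inv x \<circ> \<tau> \<circ> x) = sign (inv x) * sign \<tau> * sign x"
    using px pt pxi by (simp add: sign_compose permutation_compose)
  also have "\<dots> = sign \<tau> * (sign x * sign x)" using px by (simp add: sign_inverse)
  also have "\<dots> = sign \<tau>" by simp
  finally show "complex_of_int (sign (inv x \<circ> \<tau> \<circ> x)) = complex_of_int (sign \<tau>)" by simp
qed

lemma classfun_row: "classfun chi_row"
  by (simp add: classfun_def chi_row_def)

lemma Imm_perm_inv:
  assumes cf: "classfun \<theta>" and J: "set J \<subseteq> {1..m+n}" and x: "x permutes {..<length J}"
  shows "Imm m n \<theta> (permute_list x J) = Imm m n \<theta> J"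
proof -
  define k where "k = length J"
  note x = x[folded k_def]
  define P where "P = {h. h permutes {..<k}}"
  have J': "set (permute_list x J) \<subseteq> {1..m+n}" using J x by (simp add: k_def)
  have "Imm m n \<theta> (permute_list x J) = (\<Sum>h\<in>P. sscale (\<theta> h) (Mt m (permute_list x J) h))"
    unfolding Imm_expand[OF J'] by (simp add: P_def k_def)
  also have "\<dots> = (\<Sum>h\<in>P. sscale (\<theta> h) (Mt m J (x \<circ> h \<circ> inv x)))"
  proof (rule sum.cong[OF refl])
    fix h assume h: "h \<in> P"
    have "x \<circ> h \<circ> inv x permutes {..<k}"
      using h x permutes_inv[OF x] by (auto simp: P_def intro!: permutes_compose)
    then have "Mt m (permute_list x J) (inv x \<circ> (x \<circ> h \<circ> inv x) \<circ> x) = Mt m J (x \<circ> h \<circ> inv x)"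
      using x by (intro Mt_conj) (simp_all add: k_def)
    then show "sscale (\<theta> h) (Mt m (permute_list x J) h) = sscale (\<theta> h) (Mt m J (x \<circ> h \<circ> inv x))"
      using conj_cancel[OF x] by simp
  qed
  also have "\<dots> = (\<Sum>h\<in>P. sscale (\<theta> (inv x \<circ> (x \<circ> h \<circ> inv x) \<circ> x)) (Mt m J (x \<circ> h \<circ> inv x)))"
    using conj_cancel[OF x] by simp
  also have "\<dots> = (\<Sum>\<tau>\<in>P. sscale (\<theta> (inv x \<circ> \<tau> \<circ> x)) (Mt m J \<tau>))"
    unfolding P_def by (rule sum.reindex_bij_betw[OF conj_bij[OF x], where g = "\<lambda>\<tau>. sscale (\<theta> (inv x \<circ> \<tau> \<circ> x)) (Mt m J \<tau>)"])
  also have "\<dots> = (\<Sum>\<tau>\<in>P. sscale (\<theta> \<tau>) (Mt m J \<tau>))"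
    using cf x unfolding classfun_def P_def by (intro sum.cong refl) auto
  also have "\<dots> = Imm m n \<theta> J"
    unfolding Imm_expand[OF J] by (simp add: P_def k_def)
  finally show ?thesis .
qed

lemma Imm_sort:
  assumes cf: "classfun \<theta>" and J: "set J \<subseteq> {1..m+n}"
  shows "Imm m n \<theta> (sort J) = Imm m n \<theta> J"
proof -
  have "mset (sort J) = mset J" by simp
  then obtain p where p: "p permutes {..<length J}" "permute_list p J = sort J"
    by (rule mset_eq_permutation)
  then show ?thesis using Imm_perm_inv[OF cf J p(1)] by simp
qed

lemma blocks_set: "B \<in> set (blocks lam J) \<Longrightarrow> set B \<subseteq> set J"
proof (induction lam arbitrary: J)
  case Nil
  then show ?case by simp
next
  case (Cons a mu)
  then show ?case using set_take_subset[of a J] set_drop_subset[of a J] by auto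
qed

lemma finite_young: "finite (young lam)"
  by (rule finite_subset[of _ "{h. h permutes {..<sum_list lam}}"]) (auto simp: young_def finite_permutations)

lemma sum_filter_if: "finite A \<Longrightarrow> (\<Sum>x\<in>{x\<in>A. P x}. f x) = (\<Sum>x\<in>A. if P x then f x else (0::'a::comm_monoid_add))"
  by (simp add: sum.If_cases Int_def)

lemma sum_filter_if':
  assumes "finite {x. Q x}"
  shows "(\<Sum>x | Q x \<and> P x. f x) = (\<Sum>x | Q x. if P x then f x else (0::'a::comm_monoid_add))"
proof -
  have e: "{x. Q x} \<inter> {x. P x} = {x. Q x \<and> P x}" by auto
  show ?thesis using assms by (simp add: sum.If_cases e)
qed

lemma main_reduction:
  assumes cf: "classfun \<theta>" and th1: "\<theta> id = 1"
    and thmul: "\<And>a b h1 h2. h1 permutes {..<a} \<Longrightarrow> h2 permutes {..<b} \<Longrightarrow> \<theta> (dsum a h1 h2) = \<theta> h1 * \<theta> h2"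
    and I: "set I \<subseteq> {1..m+n}" and lI: "length I = sum_list lam"
  shows "Imm m n (ind_char (sum_list lam) (young lam) \<theta>) I =
    sscale (1 / of_nat (card (young lam)))
      (\<Sum>x\<in>{x. x permutes {..<length I}}. sprod_list m (map (Imm m n \<theta>) (map sort (blocks lam (permute_list x I)))))"
proof -
  define k where "k = length I"
  define P where "P = {x. x permutes {..<k}}"
  define H where "H = young lam"
  have finP: "finite P" unfolding P_def by (rule finite_permutations) simp
  have HP: "H \<subseteq> P" by (auto simp: H_def P_def young_def k_def lI)
  have sk: "sum_list lam = k" by (simp add: k_def lI)
  define c where "c = 1 / (of_nat (card H) :: complex)"
  have "Imm m n (ind_char (sum_list lam) (young lam) \<theta>) I =
      (\<Sum>\<sigma>\<in>P. sscale (c * (\<Sum>x\<in>P. if inv x \<circ> \<sigma> \<circ> x \<in> H then \<theta> (inv x \<circ> \<sigma> \<circ> x) else 0)) (Mt m I \<sigma>))"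
    unfolding Imm_expand[OF I] ind_char_def sk H_def[symmetric] c_def[symmetric] k_def[symmetric] P_def[symmetric]
    using finP by (intro sum.cong refl) (simp add: sum_filter_if' P_def)
  also have "\<dots> = sscale c (\<Sum>\<sigma>\<in>P. \<Sum>x\<in>P. sscale (if inv x \<circ> \<sigma> \<circ> x \<in> H then \<theta> (inv x \<circ> \<sigma> \<circ> x) else 0) (Mt m I \<sigma>))"
    by (simp add: sscale_sum sscale_sum_left sum_distrib_left)
  also have "(\<Sum>\<sigma>\<in>P. \<Sum>x\<in>P. sscale (if inv x \<circ> \<sigma> \<circ> x \<in> H then \<theta> (inv x \<circ> \<sigma> \<circ> x) else 0) (Mt m I \<sigma>))
      = (\<Sum>x\<in>P. \<Sum>\<sigma>\<in>P. sscale (if inv x \<circ> \<sigma> \<circ> x \<in> H then \<theta> (inv x \<circ> \<sigma> \<circ> x) else 0) (Mt m I \<sigma>))"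
    by (rule sum.swap)
  also have "\<dots> = (\<Sum>x\<in>P. sprod_list m (map (Imm m n \<theta>) (map sort (blocks lam (permute_list x I)))))"
  proof (rule sum.cong[OF refl])
    fix x assume xP: "x \<in> P"
    then have x: "x permutes {..<k}" by (simp add: P_def)
    have "(\<Sum>\<sigma>\<in>P. sscale (if inv x \<circ> \<sigma> \<circ> x \<in> H then \<theta> (inv x \<circ> \<sigma> \<circ> x) else 0) (Mt m I \<sigma>))
       = (\<Sum>h\<in>P. sscale (if inv x \<circ> (x \<circ> h \<circ> inv x) \<circ> x \<in> H then \<theta> (inv x \<circ> (x \<circ> h \<circ> inv x) \<circ> x) else 0) (Mt m I (x \<circ> h \<circ> inv x)))"
      unfolding P_def
      by (rule sum.reindex_bij_betw[OF conj_bij[OF x], symmetric, where g = "\<lambda>\<sigma>. sscale (if inv x \<circ> \<sigma> \<circ> x \<in> H then \<theta> (inv x \<circ> \<sigma> \<circ> x) else 0) (Mt m I \<sigma>)"])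
    also have "\<dots> = (\<Sum>h\<in>P. if h \<in> H then sscale (\<theta> h) (Mt m (permute_list x I) h) else 0)"
    proof (rule sum.cong[OF refl])
      fix h assume hP: "h \<in> P"
      have "x \<circ> h \<circ> inv x permutes {..<k}"
        using hP x permutes_inv[OF x] by (auto simp: P_def intro!: permutes_compose)
      then have "Mt m (permute_list x I) (inv x \<circ> (x \<circ> h \<circ> inv x) \<circ> x) = Mt m I (x \<circ> h \<circ> inv x)"
        using x by (intro Mt_conj) (simp_all add: k_def)
      then show "sscale (if inv x \<circ> (x \<circ> h \<circ> inv x) \<circ> x \<in> H then \<theta> (inv x \<circ> (x \<circ> h \<circ> inv x) \<circ> x) else 0) (Mt m I (x \<circ> h \<circ> inv x))
          = (if h \<in> H then sscale (\<theta> h) (Mt m (permute_list x I) h) else 0)"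
        using conj_cancel[OF x, of h] by simp
    qed
    also have "\<dots> = (\<Sum>h\<in>H. sscale (\<theta> h) (Mt m (permute_list x I) h))"
      using HP finP by (simp add: sum.If_cases Int_absorb1)
    also have "\<dots> = sprod_list m (map (Imm m n \<theta>) (blocks lam (permute_list x I)))"
      unfolding H_def
      by (rule block_imm[OF th1 thmul]) (use I x in \<open>simp_all add: k_def lI\<close>)
    also have "\<dots> = sprod_list m (map (Imm m n \<theta>) (map sort (blocks lam (permute_list x I))))"
    proof -
      have "map (Imm m n \<theta>) (blocks lam (permute_list x I)) = map (Imm m n \<theta> \<circ> sort) (blocks lam (permute_list x I))"
      proof (rule map_cong[OF refl])
        fix B assume "B \<in> set (blocks lam (permute_list x I))"
        then have "set B \<subseteq> set (permute_list x I)" by (rule blocks_set)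
        also have "\<dots> = set I" using x by (simp add: k_def)
        finally have "set B \<subseteq> {1..m+n}" using I by simp
        then show "Imm m n \<theta> B = (Imm m n \<theta> \<circ> sort) B" using Imm_sort[OF cf] by simp
      qed
      then show ?thesis by (simp only: map_map)
    qed
    finally show "(\<Sum>\<sigma>\<in>P. sscale (if inv x \<circ> \<sigma> \<circ> x \<in> H then \<theta> (inv x \<circ> \<sigma> \<circ> x) else 0) (Mt m I \<sigma>))
       = sprod_list m (map (Imm m n \<theta>) (map sort (blocks lam (permute_list x I))))" .
  qed
  finally show ?thesis by (simp add: c_def H_def P_def k_def)
qed


lemma sum_const_salg: "(\<Sum>x\<in>A. (p::salg)) = sscale (of_nat (card A)) p"
proof (rule poly_mapping_eqI)
  fix k
  show "Poly_Mapping.lookup (\<Sum>x\<in>A. p) k = Poly_Mapping.lookup (sscale (of_nat (card A)) p) k"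
    unfolding lookup_sum lookup_sscale by simp
qed

lemma alpha_mset: "alpha I = (\<Prod>x\<in>set_mset (mset I). fact (count (mset I) x))"
  by (simp add: alpha_def count_mset)

lemma card_PM_alpha: "card (permutations_of_multiset (mset I)) * alpha I = fact (length I)"
  using card_permutations_of_multiset_aux[of "mset I"] by (simp add: alpha_mset)

lemma PM_image:
  "(\<lambda>x. permute_list x I) ` {x. x permutes {..<length I}} = permutations_of_multiset (mset I)"
proof (rule set_eqI, rule iffI)
  fix J assume "J \<in> (\<lambda>x. permute_list x I) ` {x. x permutes {..<length I}}"
  then show "J \<in> permutations_of_multiset (mset I)" by (auto intro: permutations_of_multisetI)
next
  fix J assume "J \<in> permutations_of_multiset (mset I)"
  then have "mset J = mset I" by (rule permutations_of_multisetD)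
  then obtain p where "p permutes {..<length I}" "permute_list p I = J"
    by (rule mset_eq_permutation)
  then show "J \<in> (\<lambda>x. permute_list x I) ` {x. x permutes {..<length I}}" by auto
qed

lemma fiber_card:
  assumes J: "J \<in> permutations_of_multiset (mset I)"
  shows "card {x. x permutes {..<length I} \<and> permute_list x I = J} =
         card {x. x permutes {..<length I} \<and> permute_list x I = I}"
proof -
  define P where "P = {x. x permutes {..<length I}}"
  have "mset J = mset I" using J by (rule permutations_of_multisetD)
  then obtain y where y: "y permutes {..<length I}" "permute_list y I = J"
    by (rule mset_eq_permutation)
  have yi: "inv y permutes {..<length I}" using y(1) by (rule permutes_inv)
  have e: "{x. x permutes {..<length I} \<and> permute_list x I = J} =
      (\<lambda>s. s \<circ> y) ` {x. x permutes {..<length I} \<and> permute_list x I = I}"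
  proof (rule set_eqI, rule iffI)
    fix x assume x: "x \<in> {x. x permutes {..<length I} \<and> permute_list x I = J}"
    define s where "s = x \<circ> inv y"
    have sp: "s permutes {..<length I}" using x yi by (auto simp: s_def intro: permutes_compose)
    have "permute_list s I = permute_list (inv y) (permute_list x I)"
      unfolding s_def by (rule permute_list_compose) (simp add: yi)
    also have "\<dots> = permute_list (inv y) (permute_list y I)" using x y by simp
    also have "\<dots> = permute_list (y \<circ> inv y) I"
      by (rule permute_list_compose[symmetric]) (simp add: yi)
    also have "y \<circ> inv y = id" using y(1) by (simp add: permutes_inverses fun_eq_iff)
    finally have "permute_list s I = I" by simp
    moreover have "x = s \<circ> y" using y(1) by (simp add: s_def fun_eq_iff permutes_inverses)
    ultimately show "x \<in> (\<lambda>s. s \<circ> y) ` {x. x permutes {..<length I} \<and> permute_list x I = I}"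
      using sp by auto
  next
    fix x assume "x \<in> (\<lambda>s. s \<circ> y) ` {x. x permutes {..<length I} \<and> permute_list x I = I}"
    then obtain s where s: "s permutes {..<length I}" "permute_list s I = I" "x = s \<circ> y" by auto
    have "permute_list x I = permute_list y (permute_list s I)"
      unfolding s(3) by (rule permute_list_compose) (simp add: y)
    then show "x \<in> {x. x permutes {..<length I} \<and> permute_list x I = J}"
      using s y by (auto intro: permutes_compose)
  qed
  have inj: "inj_on (\<lambda>s. s \<circ> y) {x. x permutes {..<length I} \<and> permute_list x I = I}"
  proof (rule inj_onI)
    fix s t assume "s \<circ> y = t \<circ> y"
    then have "s \<circ> y \<circ> inv y = t \<circ> y \<circ> inv y" by simp
    then show "s = t" using y(1) by (simp add: fun_eq_iff permutes_inverses)
  qed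
  show ?thesis unfolding e by (rule card_image[OF inj])
qed

lemma stab_card: "card {x. x permutes {..<length I} \<and> permute_list x I = I} = alpha I"
proof -
  define P where "P = {x. x permutes {..<length I}}"
  define f where "f x = permute_list x I" for x
  define PM where "PM = permutations_of_multiset (mset I)"
  define st where "st = card {x. x permutes {..<length I} \<and> permute_list x I = I}"
  have finP: "finite P" unfolding P_def by (rule finite_permutations) simp
  have im: "f ` P = PM" unfolding f_def P_def PM_def by (rule PM_image)
  have "card P = (\<Sum>J\<in>f ` P. card {x \<in> P. f x = J})"
    using sum.image_gen[OF finP, of "\<lambda>_. 1::nat" f] by simp
  also have "\<dots> = (\<Sum>J\<in>PM. st)"
    unfolding im by (intro sum.cong refl) (simp add: fiber_card P_def f_def PM_def st_def)
  also have "\<dots> = card PM * st" by simp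
  finally have a: "card P = card PM * st" .
  have b: "card P = fact (length I)" unfolding P_def by (rule card_permutations) simp_all
  have c: "card PM * alpha I = fact (length I)" unfolding PM_def by (rule card_PM_alpha)
  have "card PM > 0" unfolding PM_def
    by (simp add: card_gt_0_iff)
  then show ?thesis using a b c unfolding st_def by (metis mult_left_cancel not_gr0)
qed

lemma fiber_card_alpha:
  "J \<in> permutations_of_multiset (mset I) \<Longrightarrow> card {x. x permutes {..<length I} \<and> permute_list x I = J} = alpha I"
  using fiber_card[of J I] stab_card[of I] by simp

lemma sum_perm_PM:
  "(\<Sum>x\<in>{x. x permutes {..<length I}}. (F (permute_list x I) :: salg)) =
    sscale (of_nat (alpha I)) (\<Sum>J\<in>permutations_of_multiset (mset I). F J)"
proof -
  define P where "P = {x. x permutes {..<length I}}"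
  define f where "f x = permute_list x I" for x
  have finP: "finite P" unfolding P_def by (rule finite_permutations) simp
  have im: "f ` P = permutations_of_multiset (mset I)" unfolding f_def P_def by (rule PM_image)
  have "(\<Sum>x\<in>P. F (f x)) = (\<Sum>J\<in>f ` P. \<Sum>x\<in>{x \<in> P. f x = J}. F (f x))"
    by (rule sum.image_gen[OF finP])
  also have "\<dots> = (\<Sum>J\<in>permutations_of_multiset (mset I). sscale (of_nat (alpha I)) (F J))"
    unfolding im
  proof (rule sum.cong[OF refl])
    fix J assume J: "J \<in> permutations_of_multiset (mset I)"
    have "(\<Sum>x\<in>{x \<in> P. f x = J}. F (f x)) = (\<Sum>x\<in>{x \<in> P. f x = J}. F J)" by simp
    also have "\<dots> = sscale (of_nat (card {x \<in> P. f x = J})) (F J)" by (rule sum_const_salg)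
    also have "card {x \<in> P. f x = J} = alpha I"
      using fiber_card_alpha[OF J] by (simp add: P_def f_def)
    finally show "(\<Sum>x\<in>{x \<in> P. f x = J}. F (f x)) = sscale (of_nat (alpha I)) (F J)" .
  qed
  finally show ?thesis by (simp add: sscale_sum P_def f_def)
qed


abbreviation PM where "PM \<equiv> permutations_of_multiset"

definition Dm :: "nat list \<Rightarrow> nat multiset \<Rightarrow> nat list list set" where
  "Dm lam A = {Is. length Is = length lam \<and> (\<forall>j<length lam. sorted (Is ! j) \<and> length (Is ! j) = lam ! j)
      \<and> mset (concat Is) = A}"

definition SA :: "nat \<Rightarrow> nat multiset \<Rightarrow> nat list set" where
  "SA a A = {S. sorted S \<and> length S = a \<and> mset S \<subseteq># A}"

lemma finite_SA: "finite (SA a A)"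
proof (rule finite_subset)
  show "SA a A \<subseteq> {xs. set xs \<subseteq> set_mset A \<and> length xs = a}"
    by (auto simp: SA_def dest!: set_mset_mono)
  show "finite {xs. set xs \<subseteq> set_mset A \<and> length xs = a}" by (rule finite_lists_length_eq) simp
qed

lemma finite_Dm: "finite (Dm lam A)"
proof (rule finite_subset)
  define L where "L = {xs. set xs \<subseteq> set_mset A \<and> length xs \<le> size A}"
  have fL: "finite L" unfolding L_def by (rule finite_lists_length_le) simp
  show "Dm lam A \<subseteq> {Is. set Is \<subseteq> L \<and> length Is = length lam}"
  proof
    fix Is assume "Is \<in> Dm lam A"
    then have c: "mset (concat Is) = A" and l: "length Is = length lam" by (auto simp: Dm_def)
    have "B \<in> L" if "B \<in> set Is" for B
    proof -
      have "set B \<subseteq> set (concat Is)" using that by auto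
      also have "\<dots> = set_mset A" using c by (metis set_mset_mset)
      finally have s: "set B \<subseteq> set_mset A" .
      have "length B \<le> length (concat Is)" using that
        by (induction Is) auto
      also have "\<dots> = size A" using c by (metis size_mset)
      finally show ?thesis using s by (simp add: L_def)
    qed
    then show "Is \<in> {Is. set Is \<subseteq> L \<and> length Is = length lam}" using l by auto
  qed
  show "finite {Is. set Is \<subseteq> L \<and> length Is = length lam}" by (rule finite_lists_length_eq[OF fL])
qed

lemma Dm_Nil: "Dm [] A = (if A = {#} then {[]} else {})"
  by (auto simp: Dm_def)

lemma Dm_Cons: "Dm (a # mu) A = (\<lambda>(S, Is). S # Is) ` (SIGMA S:SA a A. Dm mu (A - mset S))"
proof (rule set_eqI, rule iffI)
  fix Is assume "Is \<in> Dm (a # mu) A"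
  then have l: "length Is = Suc (length mu)" and b: "\<forall>j<Suc (length mu). sorted (Is ! j) \<and> length (Is ! j) = (a # mu) ! j"
    and c: "mset (concat Is) = A" by (auto simp: Dm_def)
  obtain S Is' where Is: "Is = S # Is'" using l by (cases Is) auto
  have "S \<in> SA a A"
    using b[rule_format, of 0] c by (auto simp: SA_def Is)
  moreover have "Is' \<in> Dm mu (A - mset S)"
  proof -
    have "\<forall>j<length mu. sorted (Is' ! j) \<and> length (Is' ! j) = mu ! j"
      using b by (auto simp: Is)
    moreover have "mset (concat Is') = A - mset S" using c by (auto simp: Is)
    ultimately show ?thesis using l by (simp add: Dm_def Is)
  qed
  ultimately show "Is \<in> (\<lambda>(S, Is). S # Is) ` (SIGMA S:SA a A. Dm mu (A - mset S))"
    using Is by auto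
next
  fix Is assume "Is \<in> (\<lambda>(S, Is). S # Is) ` (SIGMA S:SA a A. Dm mu (A - mset S))"
  then obtain S Is' where Is: "Is = S # Is'" and S: "S \<in> SA a A" and I': "Is' \<in> Dm mu (A - mset S)" by auto
  have sub: "mset S \<subseteq># A" using S by (simp add: SA_def)
  have "\<forall>j<length (a # mu). sorted (Is ! j) \<and> length (Is ! j) = (a # mu) ! j"
  proof (intro allI impI)
    fix j assume "j < length (a # mu)"
    then show "sorted (Is ! j) \<and> length (Is ! j) = (a # mu) ! j"
      using S I' by (cases j) (auto simp: Is SA_def Dm_def)
  qed
  moreover have "mset (concat Is) = A"
    using I' sub by (auto simp: Is Dm_def)
  ultimately show "Is \<in> Dm (a # mu) A" using I' by (simp add: Dm_def Is)
qed

lemma fiber_split: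
  assumes S: "S \<in> SA a A"
  shows "{J \<in> PM A. sort (take a J) = S} = (\<lambda>(T, R). T @ R) ` (PM (mset S) \<times> PM (A - mset S))"
proof (rule set_eqI, rule iffI)
  have sub: "mset S \<subseteq># A" and lS: "length S = a" and sS: "sorted S" using S by (auto simp: SA_def)
  fix J assume "J \<in> {J \<in> PM A. sort (take a J) = S}"
  then have J: "mset J = A" and s: "sort (take a J) = S" by (auto dest: permutations_of_multisetD)
  have mt: "mset (take a J) = mset S" using s by (metis mset_sort)
  have "mset (drop a J) = A - mset S"
    using J mt by (metis add_diff_cancel_left' append_take_drop_id mset_append)
  then show "J \<in> (\<lambda>(T, R). T @ R) ` (PM (mset S) \<times> PM (A - mset S))"
    using mt by (auto intro!: image_eqI[of _ _ "(take a J, drop a J)"] permutations_of_multisetI)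
next
  have sub: "mset S \<subseteq># A" and lS: "length S = a" and sS: "sorted S" using S by (auto simp: SA_def)
  fix J assume "J \<in> (\<lambda>(T, R). T @ R) ` (PM (mset S) \<times> PM (A - mset S))"
  then obtain T R where J: "J = T @ R" and T: "mset T = mset S" and R: "mset R = A - mset S"
    by (auto dest: permutations_of_multisetD)
  have lT: "length T = a" using T lS by (metis size_mset)
  have "mset J = A" using T R sub by (simp add: J)
  moreover have "sort (take a J) = S" using lT J T sS by (simp add: properties_for_sort)
  ultimately show "J \<in> {J \<in> PM A. sort (take a J) = S}" by (auto intro: permutations_of_multisetI)
qed

lemma fiber_split_inj:
  assumes S: "S \<in> SA a A"
  shows "inj_on (\<lambda>(T, R). T @ R) (PM (mset S) \<times> PM (A - mset S))"
proof (rule inj_onI, clarify)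
  fix T R T' R' assume T: "T \<in> PM (mset S)" "T' \<in> PM (mset S)" and e: "T @ R = T' @ R'"
  have "length T = length T'" using T by (metis permutations_of_multisetD size_mset)
  then show "T = T' \<and> R = R'" using e by simp
qed

lemma count_blocks:
  fixes G :: "nat list list \<Rightarrow> salg"
  shows "size A = sum_list lam \<Longrightarrow>
    (\<Sum>J\<in>PM A. G (map sort (blocks lam J))) =
    (\<Sum>Is\<in>Dm lam A. sscale (of_nat (\<Prod>B\<leftarrow>Is. card (PM (mset B)))) (G Is))"
proof (induction lam arbitrary: A G)
  case Nil
  then have "A = {#}" by simp
  then show ?case by (simp add: Dm_Nil)
next
  case (Cons a mu)
  have finPM: "finite (PM B)" for B by simp
  define g where "g J = G (map sort (blocks (a # mu) J))" for J
  have map_PM: "(\<lambda>J. sort (take a J)) ` PM A \<subseteq> SA a A"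
  proof
    fix S assume "S \<in> (\<lambda>J. sort (take a J)) ` PM A"
    then obtain J where J: "mset J = A" "S = sort (take a J)" by (auto dest: permutations_of_multisetD)
    have "length J \<ge> a" using J Cons.prems by (metis le_add1 size_mset sum_list_simps(2))
    moreover have "mset (take a J) \<subseteq># A"
      using J by (metis append_take_drop_id mset_append mset_subset_eq_add_left)
    ultimately show "S \<in> SA a A" using J by (simp add: SA_def)
  qed
  have "(\<Sum>J\<in>PM A. g J) = (\<Sum>S\<in>SA a A. \<Sum>J\<in>{J \<in> PM A. sort (take a J) = S}. g J)"
    by (rule sum.group[symmetric, OF finPM finite_SA map_PM])
  also have "\<dots> = (\<Sum>S\<in>SA a A. \<Sum>Is'\<in>Dm mu (A - mset S).
      sscale (of_nat (card (PM (mset S)) * (\<Prod>B\<leftarrow>Is'. card (PM (mset B))))) (G (S # Is')))"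
  proof (rule sum.cong[OF refl])
    fix S assume S: "S \<in> SA a A"
    have sub: "mset S \<subseteq># A" and lS: "length S = a" and sS: "sorted S" using S by (auto simp: SA_def)
    have "(\<Sum>J\<in>{J \<in> PM A. sort (take a J) = S}. g J) = (\<Sum>(T, R)\<in>PM (mset S) \<times> PM (A - mset S). g (T @ R))"
      unfolding fiber_split[OF S] by (subst sum.reindex[OF fiber_split_inj[OF S]]) (simp add: case_prod_unfold comp_def)
    also have "\<dots> = (\<Sum>T\<in>PM (mset S). \<Sum>R\<in>PM (A - mset S). G (S # map sort (blocks mu R)))"
    proof -
      have "g (T @ R) = G (S # map sort (blocks mu R))" if "T \<in> PM (mset S)" for T R
      proof -
        have T: "mset T = mset S" using that by (rule permutations_of_multisetD)
        have lT: "length T = a" using T lS by (metis size_mset)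
        have "sort T = S" using T sS by (simp add: properties_for_sort)
        then show ?thesis using lT by (simp add: g_def)
      qed
      then show ?thesis by (simp add: sum.cartesian_product[symmetric])
    qed
    also have "\<dots> = sscale (of_nat (card (PM (mset S)))) (\<Sum>R\<in>PM (A - mset S). G (S # map sort (blocks mu R)))"
      by (rule sum_const_salg)
    also have "(\<Sum>R\<in>PM (A - mset S). G (S # map sort (blocks mu R))) =
        (\<Sum>Is'\<in>Dm mu (A - mset S). sscale (of_nat (\<Prod>B\<leftarrow>Is'. card (PM (mset B)))) (G (S # Is')))"
    proof -
      have "size (A - mset S) = sum_list mu"
        using Cons.prems sub lS by (simp add: size_Diff_submset)
      then show ?thesis by (rule Cons.IH[where G = "\<lambda>Is. G (S # Is)"])
    qed
    finally show "(\<Sum>J\<in>{J \<in> PM A. sort (take a J) = S}. g J) = (\<Sum>Is'\<in>Dm mu (A - mset S).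
      sscale (of_nat (card (PM (mset S)) * (\<Prod>B\<leftarrow>Is'. card (PM (mset B))))) (G (S # Is')))"
      by (simp add: sscale_sum)
  qed
  also have "\<dots> = (\<Sum>(S, Is')\<in>(SIGMA S:SA a A. Dm mu (A - mset S)).
      sscale (of_nat (\<Prod>B\<leftarrow>S # Is'. card (PM (mset B)))) (G (S # Is')))"
    by (subst sum.Sigma[OF finite_SA]) (auto intro: finite_Dm)
  also have "\<dots> = (\<Sum>Is\<in>Dm (a # mu) A. sscale (of_nat (\<Prod>B\<leftarrow>Is. card (PM (mset B)))) (G Is))"
  proof -
    have inj: "inj_on (\<lambda>(S, Is). S # Is) (SIGMA S:SA a A. Dm mu (A - mset S))"
      by (auto simp: inj_on_def)
    show ?thesis unfolding Dm_Cons
      by (subst sum.reindex[OF inj]) (simp add: case_prod_unfold comp_def)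
  qed
  finally show ?case by (simp add: g_def)
qed


lemma card_young: "card (young lam) = (\<Prod>a\<leftarrow>lam. fact a)"
proof (induction lam)
  case Nil
  then show ?case by (simp add: young_Nil)
next
  case (Cons a mu)
  have "card (young (a # mu)) = card ({h1. h1 permutes {..<a}} \<times> young mu)"
    unfolding young_Cons by (rule card_image[OF dsum_inj])
  also have "\<dots> = fact a * card (young mu)"
    by (simp add: card_cartesian_product card_permutations)
  finally show ?case using Cons by simp
qed

lemma prod_list_mult: "(\<Prod>B\<leftarrow>Is. f B * g B) = (\<Prod>B\<leftarrow>Is. f B) * (\<Prod>B\<leftarrow>Is. (g B :: nat))"
  by (induction Is) auto

lemma Dm_lengths: "Is \<in> Dm lam A \<Longrightarrow> map length Is = lam"
  by (rule nth_equalityI) (auto simp: Dm_def)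

lemma Dm_decomps:
  assumes "set I \<subseteq> {1..m+n}"
  shows "Dm lam (mset I) = decomps m n lam I"
proof (rule set_eqI, rule iffI)
  fix Is assume a: "Is \<in> Dm lam (mset I)"
  have "set (Is ! j) \<subseteq> {1..m+n}" if "j < length lam" for j
  proof -
    have "Is ! j \<in> set Is" using a that by (auto simp: Dm_def)
    then have "set (Is ! j) \<subseteq> set (concat Is)" by auto
    also have "\<dots> = set I" using a by (intro mset_eq_setD) (simp add: Dm_def)
    finally show ?thesis using assms by simp
  qed
  then show "Is \<in> decomps m n lam I" using a by (auto simp: Dm_def decomps_def)
next
  fix Is assume "Is \<in> decomps m n lam I"
  then show "Is \<in> Dm lam (mset I)" by (auto simp: Dm_def decomps_def)
qed

lemma coef_eq:
  assumes Is: "Is \<in> Dm lam A"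
  shows "1 / of_nat (card (young lam)) * (of_nat (alpha I) * of_nat (\<Prod>B\<leftarrow>Is. card (PM (mset B))))
     = (of_nat (alpha I) / of_nat (\<Prod>J\<leftarrow>Is. alpha J) :: complex)"
proof -
  define C where "C = (\<Prod>B\<leftarrow>Is. card (PM (mset B)))"
  define Al where "Al = (\<Prod>J\<leftarrow>Is. alpha J)"
  have "card (young lam) = (\<Prod>a\<leftarrow>lam. fact a)" by (rule card_young)
  also have "\<dots> = (\<Prod>B\<leftarrow>Is. fact (length B))"
    unfolding Dm_lengths[OF Is, symmetric] by (simp add: map_map o_def)
  also have "\<dots> = (\<Prod>B\<leftarrow>Is. card (PM (mset B)) * alpha B)"
    by (simp add: card_PM_alpha)
  also have "\<dots> = C * Al" by (simp add: prod_list_mult C_def Al_def)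
  finally have H: "card (young lam) = C * Al" .
  have C0: "C \<noteq> 0" unfolding C_def
    by (induction Is) (auto simp: card_gt_0_iff)
  show ?thesis
    unfolding H C_def[symmetric] Al_def[symmetric] using C0 by (simp add: field_simps)
qed

lemma final_gen:
  assumes cf: "classfun \<theta>" and th1: "\<theta> id = 1"
    and thmul: "\<And>a b h1 h2. h1 permutes {..<a} \<Longrightarrow> h2 permutes {..<b} \<Longrightarrow> \<theta> (dsum a h1 h2) = \<theta> h1 * \<theta> h2"
    and I: "set I \<subseteq> {1..m+n}" and lI: "length I = sum_list lam"
  shows "Imm m n (ind_char (sum_list lam) (young lam) \<theta>) I =
    (\<Sum>Is\<in>decomps m n lam I. sscale (of_nat (alpha I) / of_nat (\<Prod>J\<leftarrow>Is. alpha J))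
       (sprod_list m (map (Imm m n \<theta>) Is)))"
proof -
  define G where "G Is = sprod_list m (map (Imm m n \<theta>) Is)" for Is
  have "Imm m n (ind_char (sum_list lam) (young lam) \<theta>) I =
    sscale (1 / of_nat (card (young lam)))
      (\<Sum>x\<in>{x. x permutes {..<length I}}. G (map sort (blocks lam (permute_list x I))))"
    unfolding G_def by (rule main_reduction[OF cf th1 thmul I lI])
  also have "(\<Sum>x\<in>{x. x permutes {..<length I}}. G (map sort (blocks lam (permute_list x I))))
      = sscale (of_nat (alpha I)) (\<Sum>J\<in>PM (mset I). G (map sort (blocks lam J)))"
    by (rule sum_perm_PM)
  also have "(\<Sum>J\<in>PM (mset I). G (map sort (blocks lam J))) =
      (\<Sum>Is\<in>Dm lam (mset I). sscale (of_nat (\<Prod>B\<leftarrow>Is. card (PM (mset B)))) (G Is))"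
    by (rule count_blocks) (simp add: lI)
  also have "sscale (1 / of_nat (card (young lam))) (sscale (of_nat (alpha I))
      (\<Sum>Is\<in>Dm lam (mset I). sscale (of_nat (\<Prod>B\<leftarrow>Is. card (PM (mset B)))) (G Is)))
    = (\<Sum>Is\<in>Dm lam (mset I). sscale (of_nat (alpha I) / of_nat (\<Prod>J\<leftarrow>Is. alpha J)) (G Is))"
    unfolding sscale_sum sscale_sscale
    by (intro sum.cong refl) (simp add: coef_eq[of _ lam "mset I" I, simplified] mult.assoc)
  finally show ?thesis unfolding Dm_decomps[OF I] G_def .
qed

lemma chi_col_mul: "h1 permutes {..<a} \<Longrightarrow> h2 permutes {..<b} \<Longrightarrow> chi_col (dsum a h1 h2) = chi_col h1 * chi_col h2"
  by (simp add: chi_col_def sign_dsum)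

theorem corollary3p3:
  fixes m n :: nat and I lam :: "nat list"
  assumes "sorted I" and "set I \<subseteq> {1..m+n}" and "is_partition lam (length I)"
  shows "Imm m n (psi lam) I =
           (\<Sum>Is\<in>decomps m n lam I.
              sscale (of_nat (alpha I) / of_nat (\<Prod>J\<leftarrow>Is. alpha J))
                (sprod_list m (map (Imm m n chi_col) Is))) \<and>
         Imm m n (phi lam) I =
           (\<Sum>Is\<in>decomps m n lam I.
              sscale (of_nat (alpha I) / of_nat (\<Prod>J\<leftarrow>Is. alpha J))
                (sprod_list m (map (Imm m n chi_row) Is)))"
proof
  have lI: "length I = sum_list lam" using assms(3) by (simp add: is_partition_def)
  have p: "psi lam = ind_char (sum_list lam) (young lam) chi_col"
    by (simp add: psi_def chi_col_def[abs_def])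
  have f: "phi lam = ind_char (sum_list lam) (young lam) chi_row"
    by (simp add: phi_def chi_row_def[abs_def])
  show "Imm m n (psi lam) I =
           (\<Sum>Is\<in>decomps m n lam I.
              sscale (of_nat (alpha I) / of_nat (\<Prod>J\<leftarrow>Is. alpha J))
                (sprod_list m (map (Imm m n chi_col) Is)))"
    unfolding p by (rule final_gen[OF classfun_col _ chi_col_mul assms(2) lI]) (simp add: chi_col_def)
  show "Imm m n (phi lam) I =
           (\<Sum>Is\<in>decomps m n lam I.
              sscale (of_nat (alpha I) / of_nat (\<Prod>J\<leftarrow>Is. alpha J))
                (sprod_list m (map (Imm m n chi_row) Is)))"
    unfolding f by (rule final_gen[OF classfun_row _ _ assms(2) lI]) (simp_all add: chi_row_def)
qed

end
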